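(* Let $n\ge 2$, $2\le k\le n$ and $0\le l<k$. Let $\Omega\subset M^n(K)$ be a bounded, open, connected domain with $C^2$ boundary, and let $c_1$, $c_2>0$ be constants. If $u\in C^2(\overline{\Omega})$ solves $$\frac{\sigma_k(\nabla^2u+Kug)}{\sigma_l(\nabla^2u+Kug)}=\frac{\binom{n}{k}}{\binom{n}{l}}\ \text{in }\overline{\Omega},\qquad u=Kc_1\ \text{on }\partial\Omega,\qquad u_\nu=c_2\ \text{on }\partial\Omega,\qquad Ku\ge 0\ \text{in }\Omega,$$ with $\nu$ the outward unit normal to $\partial\Omega$, then $\nabla^2u+Kug\in\Gamma_k$ at every point of $\overline{\Omega}$.
   Context: $M^n(K)$ denotes the complete simply connected $n$-dimensional Riemannian manifold of constant sectional curvature $K$ with metric $g$; when $K>0$ it is taken to be the open hemisphere $S^n_+(1/\sqrt{K})$. For a symmetric 2-tensor $A$, $\sigma_j(A)$ is the $j$-th elementary symmetric function of its eigenvalues (with respect to $g$), $\sigma_0=1$. The Gårding cone is $\Gamma_k=\{\lambda\in\mathbb R^n:\sigma_i(\lambda)>0,\ 1\le i\le k\}$; a symmetric tensor lies in $\Gamma_k$ if its eigenvalue vector does. $\nabla^2 u$ is the Riemannian Hessian. *)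

theory Defs
  imports "HOL-Analysis.Analysis"
begin

definition pd :: "(real^'n \<Rightarrow> real) \<Rightarrow> 'n \<Rightarrow> real^'n \<Rightarrow> real" where
  "pd f i x = deriv (\<lambda>t. f (x + t *\<^sub>R axis i 1)) 0"

definition egrad :: "(real^'n \<Rightarrow> real) \<Rightarrow> real^'n \<Rightarrow> real^'n" where
  "egrad f x = (\<chi> i. pd f i x)"

definition C2_on :: "(real^'n) set \<Rightarrow> (real^'n \<Rightarrow> real) \<Rightarrow> bool" where
  "C2_on U f \<longleftrightarrow> (\<forall>x\<in>U. f differentiable (at x)) \<and>
     (\<forall>i. \<forall>x\<in>U. (pd f i) differentiable (at x)) \<and>
     (\<forall>i j. continuous_on U (pd (pd f j) i))"

text \<open>Model of M^n(K): conformal (stereographic / Poincare ball) coordinates.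
  Domain {x. |K| |x|^2 < 1}: all of R^n for K = 0, the Poincare ball for K < 0,
  and the stereographic image of the open hemisphere for K > 0.
  Metric g = 4/(1 + K|x|^2)^2 * delta, of constant sectional curvature K.\<close>
definition model_space :: "real \<Rightarrow> (real^'n) set" where
  "model_space K = {x. \<bar>K\<bar> * (norm x)\<^sup>2 < 1}"

definition gK :: "real \<Rightarrow> real^'n \<Rightarrow> real^'n^'n" where
  "gK K x = (4 / (1 + K * (norm x)\<^sup>2)\<^sup>2) *\<^sub>R mat 1"

definition christoffel :: "(real^'n \<Rightarrow> real^'n^'n) \<Rightarrow> 'n \<Rightarrow> 'n \<Rightarrow> 'n \<Rightarrow> real^'n \<Rightarrow> real" where
  "christoffel g m i j x = (1/2) * (\<Sum>l\<in>UNIV. matrix_inv (g x) $ m $ l *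
      (pd (\<lambda>y. g y $ j $ l) i x + pd (\<lambda>y. g y $ i $ l) j x - pd (\<lambda>y. g y $ i $ j) l x))"

definition rhess :: "(real^'n \<Rightarrow> real^'n^'n) \<Rightarrow> (real^'n \<Rightarrow> real) \<Rightarrow> real^'n \<Rightarrow> real^'n^'n" where
  "rhess g u x = (\<chi> i j. pd (pd u j) i x - (\<Sum>m\<in>UNIV. christoffel g m i j x * pd u m x))"

definition diagm :: "real^'n \<Rightarrow> real^'n^'n" where
  "diagm lam = (\<chi> i j. if i = j then lam $ i else 0)"

definition g_eigvals :: "real^'n^'n \<Rightarrow> real^'n^'n \<Rightarrow> real^'n \<Rightarrow> bool" where
  "g_eigvals g A lam \<longleftrightarrow> (\<exists>P. transpose P ** g ** P = mat 1 \<and> transpose P ** A ** P = diagm lam)"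

definition tensor_eigvals :: "real^'n^'n \<Rightarrow> real^'n^'n \<Rightarrow> real^'n" where
  "tensor_eigvals g A = (SOME lam. g_eigvals g A lam)"

definition esym :: "nat \<Rightarrow> real^'n \<Rightarrow> real" where
  "esym j lam = (\<Sum>S\<in>{S. card S = j}. \<Prod>i\<in>S. lam $ i)"

definition gamma_cone :: "nat \<Rightarrow> (real^'n) set" where
  "gamma_cone k = {lam. \<forall>i\<in>{1..k}. esym i lam > 0}"

definition sigma_t :: "nat \<Rightarrow> real^'n^'n \<Rightarrow> real^'n^'n \<Rightarrow> real" where
  "sigma_t j g A = esym j (tensor_eigvals g A)"

definition local_defining_fn :: "(real^'n) set \<Rightarrow> real^'n \<Rightarrow> (real^'n) set \<Rightarrow> (real^'n \<Rightarrow> real) \<Rightarrow> bool" where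
  "local_defining_fn \<Omega> p V \<psi> \<longleftrightarrow> open V \<and> p \<in> V \<and> C2_on V \<psi> \<and>
     (\<forall>x\<in>V. egrad \<psi> x \<noteq> 0) \<and> \<Omega> \<inter> V = {x\<in>V. \<psi> x < 0}"

definition C2_boundary :: "(real^'n) set \<Rightarrow> bool" where
  "C2_boundary \<Omega> \<longleftrightarrow> (\<forall>p\<in>frontier \<Omega>. \<exists>V \<psi>. local_defining_fn \<Omega> p V \<psi>)"

definition outward_unit_normal :: "real^'n^'n \<Rightarrow> (real^'n) set \<Rightarrow> real^'n \<Rightarrow> real^'n \<Rightarrow> bool" where
  "outward_unit_normal g \<Omega> p \<nu> \<longleftrightarrow> (\<exists>V \<psi>. local_defining_fn \<Omega> p V \<psi> \<and>
     (let v = matrix_inv g *v egrad \<psi> p in \<nu> = (1 / sqrt (v \<bullet> (g *v v))) *\<^sub>R v))"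

end

theory Submission
  imports Defs "HOL-Computational_Algebra.Polynomial"
begin

lemma root_prod_dvd:
  fixes p :: "real poly"
  assumes "p \<noteq> 0" "finite W" "\<forall>w\<in>W. n w \<le> order w p"
  shows "(\<Prod>w\<in>W. [:-w,1:]^(n w)) dvd p"
  using assms(2,3)
proof (induction W rule: finite_induct)
  case empty then show ?case by simp
next
  case (insert a W)
  then obtain q where q: "p = (\<Prod>w\<in>W. [:-w,1:]^(n w)) * q" by (auto elim!: dvdE)
  have nz: "(\<Prod>w\<in>W. [:-w,1:]^(n w)) \<noteq> (0::real poly)"
    by (simp add: prod_zero_iff insert(1))
  have q0: "q \<noteq> 0" using q assms(1) by auto
  have pa: "poly (\<Prod>w\<in>W. [:-w,1:]^(n w)) a \<noteq> 0"
    using insert(2) by (simp add: poly_prod prod_zero_iff insert(1))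
  have "order a (\<Prod>w\<in>W. [:-w,1:]^(n w)) = 0"
    using pa order_root by blast
  then have "order a p = order a q" using q order_mult[of _ q a] nz q0 by simp
  then have "[:-a,1:]^(n a) dvd q" using insert(4) order_divides by auto
  then show ?case using q insert(1,2) by (simp add: mult.commute mult_dvd_mono)
qed

definition rr :: "real poly \<Rightarrow> bool" where
  "rr p \<longleftrightarrow> p \<noteq> 0 \<and> degree p \<le> (\<Sum>z\<in>{z. poly p z = 0}. order z p)"

lemma rr_pderiv:
  assumes "rr p" "degree p \<ge> 1"
  shows "rr (pderiv p)"
proof -
  define Z where "Z = {z. poly p z = 0}"
  have p0: "p \<noteq> 0" using assms rr_def by auto
  have fZ: "finite Z" using poly_roots_finite[OF p0] Z_def by simp
  have d0: "pderiv p \<noteq> 0" using assms(2) pderiv_eq_0_iff[of p] by simp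
  have ordZ: "order z p = Suc (order z (pderiv p))" if "z \<in> Z" for z
    using order_pderiv[OF p0] that Z_def by auto
  have Zne: "Z \<noteq> {}"
  proof
    assume "Z = {}"
    then show False using assms unfolding rr_def Z_def[symmetric] by simp
  qed
  define nxt where "nxt z = Min {y\<in>Z. y > z}" for z
  have nxt: "nxt z \<in> Z \<and> z < nxt z \<and> (\<forall>y\<in>Z. y > z \<longrightarrow> nxt z \<le> y)"
    if "z \<in> Z - {Max Z}" for z
  proof -
    have "z < Max Z" using that fZ by (metis DiffE Max_ge order_le_neq_trans singletonI)
    then have ne: "{y\<in>Z. y > z} \<noteq> {}" using Max_in[OF fZ Zne] by auto
    have f: "finite {y\<in>Z. y > z}" using fZ by simp
    show ?thesis using Min_in[OF f ne] Min_le[OF f] unfolding nxt_def by auto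
  qed
  have "\<exists>s. z < s \<and> s < nxt z \<and> poly (pderiv p) s = 0" if "z \<in> Z - {Max Z}" for z
  proof -
    have lt: "z < nxt z" and inZ: "nxt z \<in> Z" using nxt[OF that] by auto
    have eq: "poly p z = poly p (nxt z)" using inZ that Z_def by auto
    have "\<exists>s. z < s \<and> s < nxt z \<and> (\<lambda>v. poly (pderiv p) s * v) = (\<lambda>v. 0)"
      by (rule Rolle_deriv[OF lt eq])
        (auto intro!: continuous_intros simp: has_field_derivative_def[symmetric])
    then obtain s where "z < s \<and> s < nxt z \<and> (\<lambda>v. poly (pderiv p) s * v) = (\<lambda>v. 0)" by blast
    then show ?thesis by (metis mult_1_right)
  qed
  then obtain s where s: "\<And>z. z \<in> Z - {Max Z} \<Longrightarrow> z < s z \<and> s z < nxt z \<and> poly (pderiv p) (s z) = 0"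
    by metis
  define S where "S = s ` (Z - {Max Z})"
  have inj: "inj_on s (Z - {Max Z})"
  proof (rule inj_onI, rule ccontr)
    fix a b assume a: "a \<in> Z - {Max Z}" and b: "b \<in> Z - {Max Z}" and e: "s a = s b" and ne: "a \<noteq> b"
    { fix a b assume a: "a \<in> Z - {Max Z}" and b: "b \<in> Z - {Max Z}" and lt: "a < b"
      have "nxt a \<le> b" using nxt[OF a] b lt by auto
      then have "s a < s b" using s[OF a] s[OF b] by linarith }
    then show False using a b e ne by (metis less_irrefl linorder_neqE_linordered_idom)
  qed
  have SZ: "S \<inter> Z = {}"
  proof (rule ccontr)
    assume "S \<inter> Z \<noteq> {}"
    then obtain z where z: "z \<in> Z - {Max Z}" "s z \<in> Z" unfolding S_def by auto
    then show False using s[OF z(1)] nxt[OF z(1)] by force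
  qed
  have cardS: "card S = card Z - 1" unfolding S_def using card_image[OF inj] fZ Zne
    by (simp add: Max_in)
  have fS: "finite S" using fZ S_def by simp
  define R where "R = {z. poly (pderiv p) z = 0}"
  have fR: "finite R" using poly_roots_finite[OF d0] R_def by simp
  have SR: "S \<subseteq> R" unfolding S_def R_def using s by auto
  have zeroo: "order w (pderiv p) = 0" if "w \<notin> R" for w
    using that R_def order_root d0 by auto
  have "(\<Sum>w\<in>R. order w (pderiv p)) = (\<Sum>w\<in>R \<union> Z. order w (pderiv p))"
    by (rule sum.mono_neutral_left) (use fR fZ zeroo in auto)
  also have "\<dots> \<ge> (\<Sum>w\<in>Z \<union> S. order w (pderiv p))"
    by (rule sum_mono2) (use fR fZ SR in auto)
  finally have A: "(\<Sum>w\<in>R. order w (pderiv p)) \<ge> (\<Sum>w\<in>Z. order w (pderiv p)) + (\<Sum>w\<in>S. order w (pderiv p))"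
    using sum.union_disjoint[OF fZ fS, of "\<lambda>w. order w (pderiv p)"] SZ by (simp add: Int_commute)
  have B: "(\<Sum>w\<in>S. order w (pderiv p)) \<ge> card S"
  proof -
    have "(\<Sum>w\<in>S. order w (pderiv p)) \<ge> (\<Sum>w\<in>S. 1)"
      by (rule sum_mono) (use SR R_def order_root d0 in \<open>auto simp: Suc_le_eq\<close>)
    then show ?thesis by simp
  qed
  have C: "(\<Sum>w\<in>Z. order w p) = (\<Sum>w\<in>Z. order w (pderiv p)) + card Z"
  proof -
    have "(\<Sum>w\<in>Z. order w p) = (\<Sum>w\<in>Z. order w (pderiv p) + 1)"
      using ordZ by (intro sum.cong) auto
    then show ?thesis by (simp add: sum_Suc)
  qed
  have D: "degree p \<le> (\<Sum>w\<in>Z. order w p)" using assms(1) unfolding rr_def Z_def by simp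
  have cZ: "card Z \<ge> 1" using fZ Zne by (simp add: Suc_le_eq card_gt_0_iff)
  have "degree (pderiv p) \<le> (\<Sum>w\<in>R. order w (pderiv p))"
    using A B C D cardS cZ degree_pderiv[of p] by linarith
  then show ?thesis unfolding rr_def R_def using d0 by simp
qed

lemma rr_of_prod:
  fixes W :: "real set"
  assumes "c \<noteq> 0" "finite W" "p = smult c (\<Prod>w\<in>W. [:-w,1:]^(n w))"
  shows "rr p"
proof -
  have nzQ: "(\<Prod>w\<in>W. [:-w,1:]^(n w)) \<noteq> (0::real poly)"
    using assms(2) by (simp add: prod_zero_iff)
  have p0: "p \<noteq> 0" using assms nzQ by simp
  have deg: "degree p = (\<Sum>w\<in>W. n w)"
    using assms(1,3) by (simp add: degree_prod_eq_sum_degree degree_power_eq)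
  have ord: "n w \<le> order w p" if "w \<in> W" for w
  proof -
    have "[:-w,1:]^(n w) dvd (\<Prod>w\<in>W. [:-w,1:]^(n w))"
      by (rule dvd_prodI[OF assms(2) that])
    then have "[:-w,1:]^(n w) dvd p" using assms(3) by (simp add: dvd_smult)
    then show ?thesis using order_divides p0 by blast
  qed
  define Z where "Z = {z. poly p z = 0}"
  have fZ: "finite Z" using poly_roots_finite[OF p0] Z_def by simp
  have "(\<Sum>w\<in>W. n w) = (\<Sum>w\<in>{w\<in>W. n w \<noteq> 0}. n w)"
    by (rule sum.mono_neutral_right) (use assms(2) in auto)
  also have "\<dots> \<le> (\<Sum>w\<in>{w\<in>W. n w \<noteq> 0}. order w p)"
    by (rule sum_mono) (use ord in auto)
  also have "\<dots> \<le> (\<Sum>w\<in>Z. order w p)"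
  proof (rule sum_mono2[OF fZ])
    show "{w \<in> W. n w \<noteq> 0} \<subseteq> Z"
      using ord order_root Z_def by fastforce
  qed auto
  finally show ?thesis unfolding rr_def Z_def using deg p0 by simp
qed

lemma rr_prod_form:
  assumes "rr p"
  shows "p = smult (lead_coeff p) (\<Prod>w\<in>{z. poly p z = 0}. [:-w,1:]^(order w p))"
proof -
  define Z where "Z = {z. poly p z = 0}"
  define Q where "Q = (\<Prod>w\<in>Z. [:-w,1:]^(order w p))"
  have p0: "p \<noteq> 0" using assms rr_def by auto
  have fZ: "finite Z" using poly_roots_finite[OF p0] Z_def by simp
  have "Q dvd p" unfolding Q_def by (rule root_prod_dvd[OF p0 fZ]) auto
  then obtain r where r: "p = Q * r" by (elim dvdE)
  have Q0: "Q \<noteq> 0" unfolding Q_def using fZ by (simp add: prod_zero_iff)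
  have r0: "r \<noteq> 0" using r p0 by auto
  have dQ: "degree Q = (\<Sum>w\<in>Z. order w p)"
    unfolding Q_def by (simp add: degree_prod_eq_sum_degree degree_power_eq)
  have "degree p = degree Q + degree r" using r Q0 r0 degree_mult_eq by blast
  moreover have "degree p \<le> degree Q" using assms dQ unfolding rr_def Z_def by simp
  ultimately have "degree r = 0" by simp
  then obtain c where c: "r = [:c:]" by (metis degree_eq_zeroE)
  have lQ: "lead_coeff Q = 1" unfolding Q_def by (simp add: lead_coeff_prod lead_coeff_power)
  have "lead_coeff p = c" using r c lQ by (simp add: lead_coeff_mult)
  then show ?thesis using r c unfolding Q_def Z_def by simp
qed

definition Phi :: "real poly \<Rightarrow> real" where
  "Phi p = poly p 0 * poly (pderiv (pderiv p)) 0 - (poly (pderiv p) 0)^2"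

lemma Phi_mult: "Phi (p * q) = (poly q 0)^2 * Phi p + (poly p 0)^2 * Phi q"
  unfolding Phi_def by (simp add: pderiv_mult pderiv_add algebra_simps power2_eq_square)

lemma Phi_smult: "Phi (smult c p) = c^2 * Phi p"
  unfolding Phi_def by (simp add: pderiv_smult algebra_simps power2_eq_square)

definition good :: "real poly \<Rightarrow> bool" where
  "good p \<longleftrightarrow> poly p 0 \<noteq> 0 \<and> Phi p \<le> 0 \<and> (degree p > 0 \<longrightarrow> Phi p < 0)"

lemma good_1: "good 1" unfolding good_def Phi_def by simp

lemma good_lin: "z \<noteq> 0 \<Longrightarrow> good [:-z,1:]" unfolding good_def Phi_def by (simp add: pderiv_pCons)

lemma good_mult: assumes "good p" "good q" shows "good (p * q)"
proof -
  have p0: "p \<noteq> 0" "q \<noteq> 0" using assms unfolding good_def by auto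
  have pos: "(poly p 0)^2 > 0" "(poly q 0)^2 > 0" using assms unfolding good_def by auto
  have d: "degree (p*q) = degree p + degree q" using degree_mult_eq p0 by blast
  have a: "Phi p \<le> 0" "Phi q \<le> 0" "poly p 0 \<noteq> 0" "poly q 0 \<noteq> 0"
    using assms unfolding good_def by auto
  have le: "Phi (p*q) \<le> 0" unfolding Phi_mult
    using a pos by (intro add_nonpos_nonpos mult_nonneg_nonpos) auto
  have lt: "Phi (p*q) < 0" if "degree (p*q) > 0"
  proof -
    have "degree p > 0 \<or> degree q > 0" using that d by simp
    then have "Phi p < 0 \<or> Phi q < 0" using assms unfolding good_def by auto
    moreover have "(poly q 0)^2 * Phi p \<le> 0" "(poly p 0)^2 * Phi q \<le> 0"
      using a pos by (auto intro: mult_nonneg_nonpos)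
    moreover have "Phi p < 0 \<Longrightarrow> (poly q 0)^2 * Phi p < 0" "Phi q < 0 \<Longrightarrow> (poly p 0)^2 * Phi q < 0"
      using pos by (auto intro: mult_pos_neg)
    ultimately show ?thesis unfolding Phi_mult by linarith
  qed
  show ?thesis using le lt a unfolding good_def by simp
qed

lemma good_power: "good p \<Longrightarrow> good (p ^ n)"
  by (induction n) (auto simp: good_1 good_mult)

lemma good_prod: "finite W \<Longrightarrow> (\<And>w. w \<in> W \<Longrightarrow> good (f w)) \<Longrightarrow> good (\<Prod>w\<in>W. f w)"
  by (induction W rule: finite_induct) (auto simp: good_1 good_mult)

lemma rr_Phi_neg:
  assumes "rr p" "poly p 0 \<noteq> 0" "degree p > 0"
  shows "Phi p < 0"
proof -
  define Z where "Z = {z. poly p z = 0}"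
  have p0: "p \<noteq> 0" using assms rr_def by auto
  have fZ: "finite Z" using poly_roots_finite[OF p0] Z_def by simp
  have g: "good (\<Prod>w\<in>Z. [:-w,1:]^(order w p))"
    by (rule good_prod[OF fZ], rule good_power, rule good_lin) (use assms(2) Z_def in auto)
  have e: "p = smult (lead_coeff p) (\<Prod>w\<in>Z. [:-w,1:]^(order w p))"
    using rr_prod_form[OF assms(1)] Z_def by simp
  have dQ: "degree (\<Prod>w\<in>Z. [:-w,1:]^(order w p)) > 0"
    using e assms(3) by (metis degree_smult_le le_zero_eq neq0_conv)
  have "Phi p = (lead_coeff p)^2 * Phi (\<Prod>w\<in>Z. [:-w,1:]^(order w p))"
    by (subst e) (simp add: Phi_smult)
  then show ?thesis using g dQ p0 unfolding good_def by (simp add: mult_pos_neg)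
qed

lemma rr_pderiv_iter:
  assumes "rr p" "m < degree p"
  shows "rr ((pderiv^^m) p) \<and> degree ((pderiv^^m) p) = degree p - m"
  using assms(2)
proof (induction m)
  case 0 then show ?case using assms(1) by simp
next
  case (Suc m)
  then have IH: "rr ((pderiv^^m) p)" "degree ((pderiv^^m) p) = degree p - m" by auto
  have "degree ((pderiv^^m) p) \<ge> 1" using IH(2) Suc.prems by simp
  then show ?case using rr_pderiv[OF IH(1)] IH(2) by (simp add: degree_pderiv)
qed

lemma coeff_pderiv_iter: "coeff ((pderiv^^m) p) 0 = fact m * coeff p m"
proof (induction m arbitrary: p)
  case 0 then show ?case by simp
next
  case (Suc m)
  have "(pderiv^^Suc m) p = (pderiv^^m) (pderiv p)" by (simp add: funpow_Suc_right del: funpow.simps)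
  then show ?case using Suc by (simp add: coeff_pderiv algebra_simps)
qed

lemma prod_const_poly: "finite X \<Longrightarrow> (\<Prod>i\<in>X. [:c i:]) = [:\<Prod>i\<in>X. c i:]"
  by (induction X rule: finite_induct) (auto simp: mult.commute)

lemma coeff_prod_lin:
  fixes mu :: "'a \<Rightarrow> real"
  assumes "finite A"
  shows "coeff (\<Prod>i\<in>A. [:mu i, 1:]) m = (\<Sum>X\<in>{X. X \<subseteq> A \<and> card X + m = card A}. \<Prod>i\<in>X. mu i)"
proof -
  have "(\<Prod>i\<in>A. [:mu i, 1:]) = (\<Prod>i\<in>A. [:mu i:] + [:0,1:])" by simp
  also have "\<dots> = (\<Sum>X\<in>Pow A. (\<Prod>i\<in>X. [:mu i:]) * (\<Prod>i\<in>A-X. [:0,1:]))"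
    by (rule prod_add[OF assms])
  also have "\<dots> = (\<Sum>X\<in>Pow A. monom (\<Prod>i\<in>X. mu i) (card A - card X))"
  proof (rule sum.cong[OF refl])
    fix X assume X: "X \<in> Pow A"
    then have fX: "finite X" using assms finite_subset by auto
    have "(\<Prod>i\<in>A-X. [:0,1::real:]) = [:0,1:]^(card A - card X)"
      using X assms by (simp add: card_Diff_subset finite_subset)
    then show "(\<Prod>i\<in>X. [:mu i:]) * (\<Prod>i\<in>A-X. [:0,1:]) = monom (\<Prod>i\<in>X. mu i) (card A - card X)"
      by (simp add: prod_const_poly[OF fX] monom_altdef)
  qed
  finally have e: "coeff (\<Prod>i\<in>A. [:mu i, 1:]) m = (\<Sum>X\<in>Pow A. if card A - card X = m then (\<Prod>i\<in>X. mu i) else 0)"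
    by (simp add: coeff_sum coeff_monom)
  also have "\<dots> = (\<Sum>X\<in>{X\<in>Pow A. card A - card X = m}. \<Prod>i\<in>X. mu i)"
    by (subst sum.inter_filter[symmetric]) (simp_all add: assms Pow_def)
  also have "{X\<in>Pow A. card A - card X = m} = {X. X \<subseteq> A \<and> card X + m = card A}"
    using assms card_mono by fastforce
  finally show ?thesis .
qed

lemma esym_0: "esym 0 (lam::real^'n) = 1"
proof -
  have "{S::'n set. card S = 0} = {{}}" by (auto simp: card_eq_0_iff)
  then show ?thesis unfolding esym_def by simp
qed

lemma esym_coeffF:
  fixes lam :: "real^'n"
  assumes "j \<le> CARD('n)"
  shows "esym j lam = coeff (\<Prod>i\<in>UNIV. [:lam$i, 1:]) (CARD('n) - j)"
proof -
  have "{X::'n set. X \<subseteq> UNIV \<and> card X + (CARD('n) - j) = card (UNIV::'n set)} = {X. card X = j}"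
  proof -
    have "card (X::'n set) \<le> CARD('n)" for X by (rule card_mono) auto
    then show ?thesis using assms by fastforce
  qed
  then show ?thesis unfolding esym_def by (simp add: coeff_prod_lin)
qed

lemma rr_F: "rr (\<Prod>i\<in>(UNIV::'n::finite set). [:lam$i, 1:])"
proof -
  define W where "W = (\<lambda>i. - lam$i) ` (UNIV::'n set)"
  have "(\<Prod>i\<in>(UNIV::'n set). [:lam$i, 1:]) =
        (\<Prod>w\<in>W. \<Prod>i\<in>{i\<in>UNIV. - lam$i = w}. [:lam$i, 1:])"
    unfolding W_def by (rule prod.image_gen) simp
  also have "\<dots> = (\<Prod>w\<in>W. [:-w,1:]^(card {i\<in>UNIV. - lam$i = w}))"
  proof (rule prod.cong[OF refl])
    fix w
    have "(\<Prod>i\<in>{i\<in>UNIV. - lam$i = w}. [:lam$i, 1:]) = (\<Prod>i\<in>{i\<in>UNIV. - lam$i = w}. [:-w, 1:])"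
      by (rule prod.cong) auto
    then show "(\<Prod>i\<in>{i\<in>UNIV. - lam$i = w}. [:lam$i, 1:]) = [:-w,1:]^(card {i\<in>UNIV. - lam$i = w})"
      by simp
  qed
  finally show ?thesis
    by (intro rr_of_prod[of 1 W]) (auto simp: W_def)
qed

lemma degree_F: "degree (\<Prod>i\<in>(UNIV::'n::finite set). [:lam$i, 1::real:]) = CARD('n)"
  by (simp add: degree_prod_eq_sum_degree)

lemma newton_strict:
  fixes lam :: "real^'n"
  assumes j: "1 \<le> j" "j + 1 \<le> CARD('n)" and z: "esym j lam = 0" and nz: "esym (j+1) lam \<noteq> 0"
  shows "esym (j-1) lam * esym (j+1) lam < 0"
proof -
  define F where "F = (\<Prod>i\<in>(UNIV::'n set). [:lam$i, 1::real:])"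
  define m where "m = CARD('n) - j - 1"
  define S where "S = (pderiv^^m) F"
  have mlt: "m < degree F" using j unfolding m_def F_def degree_F by simp
  have rS: "rr S" and dS: "degree S = CARD('n) - m"
    using rr_pderiv_iter[OF _ mlt] rr_F[of lam] unfolding S_def F_def degree_F by auto
  have c1: "coeff F m = esym (j+1) lam" using esym_coeffF[of "j+1" lam] j unfolding F_def m_def
    by (simp add: diff_diff_add)
  have c2: "coeff F (Suc m) = esym j lam" using esym_coeffF[of "j" lam] j unfolding F_def m_def
    by (simp add: Suc_diff_Suc)
  have c3: "coeff F (Suc (Suc m)) = esym (j-1) lam"
  proof -
    have "Suc (Suc m) = CARD('n) - (j - 1)" using j unfolding m_def by simp
    then show ?thesis using esym_coeffF[of "j-1" lam] j unfolding F_def by simp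
  qed
  have p0: "poly S 0 = fact m * esym (j+1) lam"
    unfolding S_def poly_0_coeff_0 coeff_pderiv_iter c1 ..
  have p1: "poly (pderiv S) 0 = fact (Suc m) * esym j lam"
  proof -
    have "poly (pderiv S) 0 = coeff ((pderiv^^(Suc m)) F) 0" unfolding poly_0_coeff_0 S_def by simp
    also have "\<dots> = fact (Suc m) * esym j lam" by (simp only: coeff_pderiv_iter c2)
    finally show ?thesis .
  qed
  have p2: "poly (pderiv (pderiv S)) 0 = fact (Suc (Suc m)) * esym (j-1) lam"
  proof -
    have "poly (pderiv (pderiv S)) 0 = coeff ((pderiv^^(Suc (Suc m))) F) 0" unfolding poly_0_coeff_0 S_def by simp
    also have "\<dots> = fact (Suc (Suc m)) * esym (j-1) lam" by (simp only: coeff_pderiv_iter c3)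
    finally show ?thesis .
  qed
  have "Phi S < 0"
    by (rule rr_Phi_neg[OF rS]) (use p0 nz dS j m_def in auto)
  then have "(fact m * fact (Suc (Suc m))) * (esym (j-1) lam * esym (j+1) lam) < 0"
    unfolding Phi_def p0 p1 p2 z by (simp add: algebra_simps)
  moreover have "(fact m * fact (Suc (Suc m)) :: real) > 0" by simp
  ultimately show ?thesis by (simp add: zero_less_mult_iff mult_less_0_iff)
qed

lemma gamma_closed:
  fixes lam :: "real^'n"
  assumes k: "k \<le> CARD('n)" and nn: "\<forall>i\<in>{1..k}. esym i lam \<ge> 0" and pk: "esym k lam > 0"
  shows "\<forall>i\<in>{1..k}. esym i lam > 0"
proof (rule ccontr)
  assume "\<not> ?thesis"
  then have ne: "{i\<in>{1..k}. esym i lam = 0} \<noteq> {}" using nn by force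
  define j where "j = Max {i\<in>{1..k}. esym i lam = 0}"
  have jin: "j \<in> {1..k}" "esym j lam = 0" using Max_in[OF _ ne] j_def by auto
  have jmax: "\<And>i. i \<in> {1..k} \<Longrightarrow> esym i lam = 0 \<Longrightarrow> i \<le> j" using Max_ge j_def by auto
  have jk: "j < k" using jin pk by (metis atLeastAtMost_iff le_neq_implies_less less_irrefl)
  have pj1: "esym (j+1) lam > 0"
  proof -
    have "j + 1 \<in> {1..k}" using jk by auto
    moreover have "esym (j+1) lam \<noteq> 0" using jmax[of "j+1"] jk by fastforce
    ultimately show ?thesis using nn by force
  qed
  have "esym (j-1) lam * esym (j+1) lam < 0"
    by (rule newton_strict) (use jin jk k pj1 in auto)
  then have neg: "esym (j-1) lam < 0" using pj1 by (simp add: mult_less_0_iff)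
  show False
  proof (cases "j = 1")
    case True then show False using neg esym_0[of lam] by simp
  next
    case False then have "j - 1 \<in> {1..k}" using jin by auto
    then show False using nn neg by force
  qed
qed

lemma sym_inner:
  fixes A :: "real^'n^'n"
  assumes "transpose A = A"
  shows "x \<bullet> (A *v y) = (A *v x) \<bullet> y"
proof -
  have "x \<bullet> (A *v y) = (x v* A) \<bullet> y" by (simp add: dot_lmul_matrix)
  also have "x v* A = transpose A *v x" by simp
  finally show ?thesis using assms by simp
qed

lemma quad_nonpos_imp:
  fixes b c :: real
  assumes "\<And>t. 2 * t * b + t^2 * c \<le> 0"
  shows "b = 0"
proof (rule ccontr)
  assume b: "b \<noteq> 0"
  define s where "s = 1 / (\<bar>c\<bar> + 1)"
  have s: "s > 0" "s * \<bar>c\<bar> < 1" unfolding s_def by (auto simp: field_simps)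
  have "2 * (s*b) * b + (s*b)^2 * c \<le> 0" by (rule assms)
  then have "s * b^2 * (2 + s * c) \<le> 0" by (simp add: algebra_simps power2_eq_square)
  moreover have "s * b^2 > 0" using s b by simp
  moreover have "2 + s * c > 0" using s 
  proof -
    have "-\<bar>c\<bar> \<le> c" by simp
    then have "s * (-\<bar>c\<bar>) \<le> s * c" using s(1) by (intro mult_left_mono) auto
    then show ?thesis using s(2) by simp
  qed
  ultimately show False using mult_pos_pos[of "s*b^2" "2 + s*c"] by linarith
qed

lemma eigvec_exists:
  fixes A :: "real^'n^'n"
  assumes sym: "transpose A = A" and W: "subspace W" and inv: "\<forall>x\<in>W. A *v x \<in> W"
    and nz: "\<exists>x\<in>W. x \<noteq> 0"
  shows "\<exists>x\<in>W. norm x = 1 \<and> (\<exists>mu. A *v x = mu *\<^sub>R x)"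
proof -
  define K where "K = W \<inter> sphere 0 1"
  have cK: "compact K" unfolding K_def using closed_subspace[OF W]
    by (simp add: closed_Int_compact Int_commute)
  obtain x1 where x1: "x1 \<in> W" "x1 \<noteq> 0" using nz by auto
  have "(1/norm x1) *\<^sub>R x1 \<in> K" unfolding K_def using x1 W by (simp add: subspace_mul)
  then have neK: "K \<noteq> {}" by auto
  have ct: "continuous_on K (\<lambda>x. x \<bullet> (A *v x))"
    by (intro continuous_intros continuous_on_id linear_continuous_on) (simp add: matrix_vector_mul_bounded_linear)
  obtain x0 where x0: "x0 \<in> K" and mx: "\<And>y. y \<in> K \<Longrightarrow> y \<bullet> (A *v y) \<le> x0 \<bullet> (A *v x0)"
    using continuous_attains_sup[OF cK neK ct] by blast
  define M where "M = x0 \<bullet> (A *v x0)"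
  have x0W: "x0 \<in> W" and nx0: "norm x0 = 1" using x0 K_def by auto
  have xx: "x0 \<bullet> x0 = 1" using nx0 by (simp add: dot_square_norm)
  have orth: "y \<bullet> (A *v x0) = 0" if yW: "y \<in> W" and yo: "y \<bullet> x0 = 0" for y
  proof (rule quad_nonpos_imp[where c = "y \<bullet> (A *v y) - M * (y \<bullet> y)"])
    fix t :: real
    define z where "z = x0 + t *\<^sub>R y"
    have zz: "z \<bullet> z = 1 + t^2 * (y \<bullet> y)" unfolding z_def using xx yo
      by (simp add: inner_add_left inner_add_right inner_commute power2_eq_square)
    have zpos: "z \<bullet> z > 0" unfolding zz by (simp add: add_pos_nonneg)
    then have nz: "norm z > 0" by (simp add: dot_square_norm)
    have zW: "z \<in> W" unfolding z_def using x0W yW W by (simp add: subspace_mul subspace_add)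
    have "(1/norm z) *\<^sub>R z \<in> K" unfolding K_def
      using zW W nz by (simp add: subspace_mul)
    then have "((1/norm z) *\<^sub>R z) \<bullet> (A *v ((1/norm z) *\<^sub>R z)) \<le> M" using mx M_def by blast
    then have "(1/(norm z)^2) * (z \<bullet> (A *v z)) \<le> M"
      by (simp add: matrix_vector_mult_scaleR power2_eq_square)
    then have "z \<bullet> (A *v z) \<le> M * (norm z)^2" using nz by (simp add: field_simps)
    then have le: "z \<bullet> (A *v z) \<le> M * (z \<bullet> z)" by (simp add: dot_square_norm)
    have Az: "A *v z = A *v x0 + t *\<^sub>R (A *v y)" unfolding z_def
      by (simp add: matrix_vector_right_distrib matrix_vector_mult_scaleR)
    have s1: "x0 \<bullet> (A *v y) = y \<bullet> (A *v x0)" using sym_inner[OF sym, of x0 y] by (simp add: inner_commute)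
    have "z \<bullet> (A *v z) = x0 \<bullet> (A *v x0) + t * (x0 \<bullet> (A *v y)) + t * (y \<bullet> (A *v x0)) + t * t * (y \<bullet> (A *v y))"
      unfolding Az unfolding z_def by (simp add: inner_add_left inner_add_right algebra_simps)
    then have "z \<bullet> (A *v z) = M + 2 * t * (y \<bullet> (A *v x0)) + t^2 * (y \<bullet> (A *v y))"
      unfolding s1 M_def by (simp add: power2_eq_square)
    then show "2 * t * (y \<bullet> (A *v x0)) + t\<^sup>2 * (y \<bullet> (A *v y) - M * (y \<bullet> y)) \<le> 0"
      using le unfolding zz by (simp add: algebra_simps)
  qed
  define r where "r = A *v x0 - M *\<^sub>R x0"
  have rW: "r \<in> W" unfolding r_def using inv x0W W by (simp add: subspace_diff subspace_mul)
  have "x0 \<bullet> r = x0 \<bullet> (A *v x0) - M * (x0 \<bullet> x0)" unfolding r_def by (simp add: inner_diff_right)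
  then have rx: "r \<bullet> x0 = 0" using xx M_def by (simp add: inner_commute)
  have "r \<bullet> r = r \<bullet> (A *v x0) - M * (r \<bullet> x0)" unfolding r_def
    by (simp add: inner_diff_right)
  then have "r \<bullet> r = 0" using orth[OF rW rx] rx by simp
  then have "r = 0" by simp
  then have "A *v x0 = M *\<^sub>R x0" unfolding r_def by simp
  then show ?thesis using x0W nx0 by blast
qed

lemma orth_eig_set:
  fixes A :: "real^'n^'n"
  assumes sym: "transpose A = A"
  shows "m \<le> CARD('n) \<Longrightarrow> \<exists>B. finite B \<and> card B = m \<and> (\<forall>x\<in>B. norm x = 1 \<and> (\<exists>mu. A *v x = mu *\<^sub>R x))
            \<and> (\<forall>x\<in>B. \<forall>y\<in>B. x \<noteq> y \<longrightarrow> x \<bullet> y = 0)"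
proof (induction m)
  case 0 then show ?case by (intro exI[of _ "{}"]) auto
next
  case (Suc m)
  then obtain B where B: "finite B" "card B = m" "\<forall>x\<in>B. norm x = 1 \<and> (\<exists>mu. A *v x = mu *\<^sub>R x)"
    "\<forall>x\<in>B. \<forall>y\<in>B. x \<noteq> y \<longrightarrow> x \<bullet> y = 0" by auto
  define W where "W = {x. \<forall>b\<in>B. b \<bullet> x = 0}"
  have sW: "subspace W" unfolding W_def subspace_def by (auto simp: inner_add_right)
  have iW: "\<forall>x\<in>W. A *v x \<in> W"
  proof (intro ballI)
    fix x assume x: "x \<in> W"
    show "A *v x \<in> W" unfolding W_def
    proof (intro CollectI ballI)
      fix b assume b: "b \<in> B"
      then obtain mu where "A *v b = mu *\<^sub>R b" using B(3) by auto
      then show "b \<bullet> (A *v x) = 0" using sym_inner[OF sym, of b x] x b W_def by auto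
    qed
  qed
  have "dim B \<le> card B" using dim_le_card[OF span_superset B(1)] .
  then have "dim B < DIM(real^'n)" using B(2) Suc.prems by simp
  then obtain x where x: "x \<noteq> 0" "\<And>y. y \<in> span B \<Longrightarrow> orthogonal x y"
    using orthogonal_to_subspace_exists by blast
  have "x \<in> W" unfolding W_def using x(2) span_superset
    by (auto simp: orthogonal_def inner_commute)
  then obtain e where e: "e \<in> W" "norm e = 1" "\<exists>mu. A *v e = mu *\<^sub>R e"
    using eigvec_exists[OF sym sW iW] x(1) by blast
  have eB: "e \<notin> B"
  proof
    assume "e \<in> B"
    then have "e \<bullet> e = 0" using e(1) W_def by auto
    then show False using e(2) by simp
  qed
  show ?case
  proof (intro exI[of _ "insert e B"] conjI)
    show "finite (insert e B)" using B(1) by simp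
    show "card (insert e B) = Suc m" using B(1,2) eB by simp
    show "\<forall>x\<in>insert e B. norm x = 1 \<and> (\<exists>mu. A *v x = mu *\<^sub>R x)" using B(3) e by auto
    show "\<forall>x\<in>insert e B. \<forall>y\<in>insert e B. x \<noteq> y \<longrightarrow> x \<bullet> y = 0"
      using B(4) e(1) W_def by (auto simp: inner_commute)
  qed
qed

lemma spectral:
  fixes A :: "real^'n^'n"
  assumes sym: "transpose A = A"
  shows "\<exists>(P::real^'n^'n) (mu::real^'n). transpose P ** P = mat 1 \<and> transpose P ** A ** P = diagm mu"
proof -
  obtain B where B: "finite B" "card B = CARD('n)" "\<forall>x\<in>B. norm x = 1 \<and> (\<exists>mu. A *v x = mu *\<^sub>R x)"
    "\<forall>x\<in>B. \<forall>y\<in>B. x \<noteq> y \<longrightarrow> x \<bullet> y = 0" using orth_eig_set[OF sym, of "CARD('n)"] by auto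
  obtain h where h: "bij_betw h (UNIV::'n set) B"
    using finite_same_card_bij[of "UNIV::'n set" B] B(1,2) by auto
  have hB: "h i \<in> B" for i using h bij_betwE by blast
  have hinj: "h i = h j \<Longrightarrow> i = j" for i j using h by (meson UNIV_I bij_betw_def inj_onD)
  have hh: "h i \<bullet> h j = (if i = j then 1 else 0)" for i j
  proof (cases "i = j")
    case True then show ?thesis using B(3) hB[of i] by (simp add: dot_square_norm)
  next
    case False then have "h i \<noteq> h j" using hinj by blast
    then show ?thesis using B(4) hB[of i] hB[of j] False by simp
  qed
  define mu where "mu = (\<chi> c. SOME m. A *v h c = m *\<^sub>R h c)"
  have eig: "A *v h c = (mu $ c) *\<^sub>R h c" for c
    unfolding mu_def using B(3) hB[of c] by (auto intro: someI_ex)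
  define P :: "real^'n^'n" where "P = (\<chi> r c. h c $ r)"
  have TPP: "(transpose P ** M) $ i $ j = h i \<bullet> (\<chi> r. M $ r $ j)" for M :: "real^'n^'n" and i j
    unfolding P_def matrix_matrix_mult_def transpose_def inner_vec_def by simp
  have AP: "A ** P = (\<chi> r c. (mu $ c) * h c $ r)"
  proof -
    have "(A ** P) $ r $ c = (A *v h c) $ r" for r c
      unfolding P_def matrix_matrix_mult_def matrix_vector_mult_def by simp
    then show ?thesis using eig by (simp add: vec_eq_iff)
  qed
  have "transpose P ** P = mat 1"
  proof -
    have "(\<chi> r. P $ r $ j) = h j" for j unfolding P_def by (simp add: vec_eq_iff)
    then show ?thesis using TPP[of P] hh by (simp add: vec_eq_iff mat_def)
  qed
  moreover have "transpose P ** A ** P = diagm mu"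
  proof -
    have "(\<chi> r. (A ** P) $ r $ j) = (mu $ j) *\<^sub>R h j" for j unfolding AP by (simp add: vec_eq_iff)
    then have "(transpose P ** (A ** P)) $ i $ j = (if i = j then mu $ i else 0)" for i j
      using TPP[of "A ** P" i j] hh by simp
    then show ?thesis by (simp add: vec_eq_iff diagm_def matrix_mul_assoc)
  qed
  ultimately show ?thesis by (intro exI[of _ P] exI[of _ mu] conjI)
qed

lemma mat_scaleR_left: "(a *\<^sub>R X) ** (Y::real^'n^'m) = a *\<^sub>R (X ** Y)" for X :: "real^'m^'k"
  by (simp add: scalar_matrix_assoc)
lemma mat_scaleR_right: "(X::real^'m^'k) ** (a *\<^sub>R Y) = a *\<^sub>R (X ** Y)" for Y :: "real^'n^'m"
  by (simp add: matrix_matrix_mult_def vec_eq_iff sum_distrib_left algebra_simps scaleR_sum_right)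
lemma transpose_scaleR': "transpose (a *\<^sub>R (X::real^'n^'m)) = a *\<^sub>R transpose X"
  by (simp add: transpose_def vec_eq_iff)
lemma matrix_add_rdistrib': "((B::real^'m^'k) + C) ** (A::real^'n^'m) = B ** A + C ** A"
  by (simp add: matrix_matrix_mult_def vec_eq_iff sum.distrib algebra_simps)
lemma diagm_scaleR: "diagm (a *\<^sub>R mu) = a *\<^sub>R diagm (mu::real^'n)"
  by (simp add: diagm_def vec_eq_iff)

lemma g_eig_exists:
  fixes A :: "real^'n^'n"
  assumes c: "c > 0" and sym: "transpose A = A"
  shows "\<exists>lam. g_eigvals (c *\<^sub>R mat 1) A lam"
proof -
  obtain P :: "real^'n^'n" and mu where P: "transpose P ** P = mat 1" "transpose P ** A ** P = diagm mu"
    using spectral[OF sym] by blast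
  define Q where "Q = (1 / sqrt c) *\<^sub>R P"
  have s: "(1 / sqrt c) * (1 / sqrt c) = 1 / c" using c by (simp add: real_sqrt_mult[symmetric])
  have "transpose Q ** (c *\<^sub>R mat 1) ** Q = mat 1"
    unfolding Q_def transpose_scaleR' mat_scaleR_left mat_scaleR_right
    using P(1) c s by (simp add: matrix_mul_assoc)
  moreover have "transpose Q ** A ** Q = diagm ((1/c) *\<^sub>R mu)"
    unfolding Q_def transpose_scaleR' mat_scaleR_left mat_scaleR_right diagm_scaleR
    using P(2) s by simp
  ultimately show ?thesis unfolding g_eigvals_def by blast
qed

lemma det_diagm: "det (diagm (mu::real^'n)) = (\<Prod>i\<in>UNIV. mu $ i)"
  by (subst det_diagonal) (auto simp: diagm_def)

lemma g_eig_charpoly: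
  fixes g A :: "real^'n^'n"
  assumes "g_eigvals g A lam"
  shows "det g \<noteq> 0" "(\<Prod>i\<in>UNIV. t + lam $ i) = det (t *\<^sub>R g + A) / det g"
proof -
  obtain P where P: "transpose P ** g ** P = mat 1" "transpose P ** A ** P = diagm lam"
    using assms unfolding g_eigvals_def by blast
  have dP: "det P * det P * det g = 1"
    using arg_cong[OF P(1), of det] by (simp add: det_mul mult_ac)
  then show dg: "det g \<noteq> 0" by auto
  have "transpose P ** (t *\<^sub>R g + A) ** P = t *\<^sub>R mat 1 + diagm lam"
    using P by (simp add: matrix_add_ldistrib matrix_add_rdistrib' mat_scaleR_left mat_scaleR_right matrix_mul_assoc)
  moreover have "det (transpose P ** (t *\<^sub>R g + A) ** P) = det P * det (t *\<^sub>R g + A) * det P"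
    by (simp add: det_mul)
  ultimately have "det P * det P * det (t *\<^sub>R g + A) = det (t *\<^sub>R (mat 1::real^'n^'n) + diagm lam)"
    by (simp add: mult_ac)
  also have "det (t *\<^sub>R (mat 1::real^'n^'n) + diagm lam) = (\<Prod>i\<in>UNIV. t + lam $ i)"
    by (subst det_diagonal) (auto simp: diagm_def mat_def)
  finally have E: "det P * det P * det (t *\<^sub>R g + A) = (\<Prod>i\<in>UNIV. t + lam $ i)" .
  show "(\<Prod>i\<in>UNIV. t + lam $ i) = det (t *\<^sub>R g + A) / det g"
  proof -
    have "det P * det P = 1 / det g" using dP dg by (simp add: field_simps)
    then show ?thesis using E[symmetric] by (simp add: field_simps)
  qed
qed

definition Fpoly :: "real^'n^'n \<Rightarrow> real^'n^'n \<Rightarrow> real poly" where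
  "Fpoly g A = smult (1 / det g) (det (\<chi> i j. [:A$i$j, g$i$j:]))"

lemma poly_det: "poly (det (M :: real poly^'n^'n)) t = det (\<chi> i j. poly (M$i$j) t)"
  unfolding det_def by (simp add: poly_sum poly_prod)

lemma poly_Fpoly: "poly (Fpoly g A) t = det (t *\<^sub>R g + A) / det g"
proof -
  have "(\<chi> i j. poly ((\<chi> i j. [:A$i$j, g$i$j:]) $ i $ j) t) = t *\<^sub>R g + A"
    by (simp add: vec_eq_iff algebra_simps)
  then show ?thesis unfolding Fpoly_def by (simp add: poly_det)
qed

lemma esym_Fpoly:
  fixes g A :: "real^'n^'n"
  assumes "g_eigvals g A lam" "j \<le> CARD('n)"
  shows "esym j lam = coeff (Fpoly g A) (CARD('n) - j)"
proof -
  have "poly (\<Prod>i\<in>UNIV. [:lam$i, 1:]) t = poly (Fpoly g A) t" for t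
    using g_eig_charpoly(2)[OF assms(1), of t] by (simp add: poly_prod poly_Fpoly add.commute)
  then have "(\<Prod>i\<in>UNIV. [:lam$i, 1:]) = Fpoly g A" using poly_eq_poly_eq_iff by blast
  then show ?thesis using esym_coeffF[OF assms(2)] by simp
qed

lemma sigma_t_Fpoly:
  fixes g A :: "real^'n^'n"
  assumes "\<exists>lam. g_eigvals g A lam" "j \<le> CARD('n)"
  shows "sigma_t j g A = coeff (Fpoly g A) (CARD('n) - j)"
  unfolding sigma_t_def tensor_eigvals_def
  by (rule esym_Fpoly[OF someI_ex[OF assms(1)] assms(2)])

lemma cont_coeff_mult:
  assumes "\<And>m. continuous_on S (\<lambda>x. coeff (p x) m)" "\<And>m. continuous_on S (\<lambda>x. coeff (q x) m)"
  shows "continuous_on S (\<lambda>x. coeff (p x * q x :: real poly) m)"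
  unfolding coeff_mult by (intro continuous_intros assms)

lemma cont_coeff_prod:
  assumes "finite I" "\<And>i m. i \<in> I \<Longrightarrow> continuous_on S (\<lambda>x. coeff (f x i) m)"
  shows "continuous_on S (\<lambda>x. coeff (\<Prod>i\<in>I. f x i :: real poly) m)"
  using assms
proof (induction I arbitrary: m rule: finite_induct)
  case empty then show ?case by (simp add: coeff_1 continuous_on_const)
next
  case (insert a I)
  then show ?case by (simp, intro cont_coeff_mult) auto
qed

lemma cont_coeff_det:
  fixes M :: "'a::topological_space \<Rightarrow> real poly^'n^'n"
  assumes "\<And>i j m. continuous_on S (\<lambda>x. coeff (M x $ i $ j) m)"
  shows "continuous_on S (\<lambda>x. coeff (det (M x)) m)"
proof -
  have "coeff (det (M x)) m = (\<Sum>p\<in>{p. p permutes (UNIV::'n set)}. of_int (sign p) * coeff (\<Prod>i\<in>UNIV. M x $ i $ p i) m)" for x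
    unfolding det_def coeff_sum by (simp add: of_int_poly)
  moreover have "continuous_on S (\<lambda>x. (\<Sum>p\<in>{p. p permutes (UNIV::'n set)}. of_int (sign p) * coeff (\<Prod>i\<in>UNIV. M x $ i $ p i) m))"
    by (intro continuous_intros cont_coeff_prod assms) auto
  ultimately show ?thesis by simp
qed

lemma cont_det:
  fixes M :: "'a::topological_space \<Rightarrow> real^'n^'n"
  assumes "\<And>i j. continuous_on S (\<lambda>x. M x $ i $ j)"
  shows "continuous_on S (\<lambda>x. det (M x))"
  unfolding det_def by (intro continuous_intros assms)

lemma cont_Fpoly:
  fixes g A :: "'a::topological_space \<Rightarrow> real^'n^'n"
  assumes "\<And>i j. continuous_on S (\<lambda>x. g x $ i $ j)" "\<And>i j. continuous_on S (\<lambda>x. A x $ i $ j)"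
    "\<And>x. x \<in> S \<Longrightarrow> det (g x) \<noteq> 0"
  shows "continuous_on S (\<lambda>x. coeff (Fpoly (g x) (A x)) m)"
proof -
  have c: "continuous_on S (\<lambda>x. coeff ((\<chi> i j. [:A x $i$j, g x $i$j:]) $ i $ j) m)" for i j m
  proof (cases m)
    case 0 then show ?thesis using assms(2) by simp
  next
    case (Suc k) then show ?thesis using assms(1) by (cases k) (simp_all add: continuous_on_const)
  qed
  show ?thesis unfolding Fpoly_def coeff_smult
    by (intro continuous_intros cont_coeff_det c cont_det assms) (use assms(3) in auto)
qed

lemma line_has_derivative:
  assumes "(f has_derivative f') (at (y + s0 *\<^sub>R w))"
  shows "((\<lambda>s. f (y + s *\<^sub>R w)) has_real_derivative f' w) (at s0)"
proof -
  have l: "((\<lambda>s. y + s *\<^sub>R w) has_derivative (\<lambda>s. s *\<^sub>R w)) (at s0)"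
    by (auto intro!: derivative_eq_intros)
  have "((\<lambda>s. f (y + s *\<^sub>R w)) has_derivative (\<lambda>s. f' (s *\<^sub>R w))) (at s0)"
    using has_derivative_compose[OF l assms] by (simp add: o_def)
  moreover have "linear f'" using assms has_derivative_linear by blast
  ultimately have "((\<lambda>s. f (y + s *\<^sub>R w)) has_derivative (\<lambda>s. s * f' w)) (at s0)"
    by (simp add: linear_scale)
  moreover have "(\<lambda>s. s * f' w) = (*) (f' w)" by (auto simp: mult.commute)
  ultimately show ?thesis by (simp add: has_field_derivative_def)
qed

lemma pd_frechet:
  assumes "(f has_derivative f') (at x)"
  shows "pd f i x = f' (axis i 1)"
proof -
  have "((\<lambda>s. f (x + s *\<^sub>R axis i 1)) has_real_derivative f' (axis i 1)) (at 0)"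
    by (rule line_has_derivative) (use assms in simp)
  then show ?thesis unfolding pd_def by (rule DERIV_imp_deriv)
qed

lemma frechet_egrad:
  assumes "(f has_derivative f') (at x)"
  shows "f' h = egrad f x \<bullet> h"
proof -
  have lin: "linear f'" using assms has_derivative_linear by blast
  have e: "(\<Sum>i\<in>UNIV. (h$i) *\<^sub>R axis i 1) = h" using basis_expansion[of h] by (simp add: scalar_mult_eq_scaleR)
  have "f' (\<Sum>i\<in>UNIV. (h$i) *\<^sub>R axis i 1) = (\<Sum>i\<in>UNIV. f' ((h$i) *\<^sub>R axis i 1))"
    by (rule linear_sum[OF lin])
  also have "\<dots> = (\<Sum>i\<in>UNIV. (h$i) * f' (axis i 1))"
    by (simp add: linear_scale[OF lin])
  finally have "f' h = (\<Sum>i\<in>UNIV. (h$i) * f' (axis i 1))" unfolding e .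
  also have "\<dots> = egrad f x \<bullet> h"
    unfolding egrad_def inner_vec_def using pd_frechet[OF assms] by (simp add: mult.commute)
  finally show ?thesis .
qed

lemma has_derivative_egrad:
  assumes "f differentiable (at x)"
  shows "(f has_derivative (\<lambda>h. egrad f x \<bullet> h)) (at x)"
proof -
  obtain f' where f': "(f has_derivative f') (at x)" using assms differentiable_def by blast
  have "f' = (\<lambda>h. egrad f x \<bullet> h)" using frechet_egrad[OF f'] by auto
  then show ?thesis using f' by simp
qed

lemma line_deriv:
  assumes "f differentiable (at (y + s0 *\<^sub>R w))"
  shows "((\<lambda>s. f (y + s *\<^sub>R w)) has_real_derivative (egrad f (y + s0 *\<^sub>R w) \<bullet> w)) (at s0)"
  using line_has_derivative[OF has_derivative_egrad[OF assms]] .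

lemma egrad_axis: "egrad f x \<bullet> axis i 1 = pd f i x"
  by (simp add: egrad_def inner_axis)

lemma delta_mvt:
  fixes u :: "real^'n \<Rightarrow> real"
  assumes du: "\<forall>y\<in>U. u differentiable (at y)"
    and dpu: "\<forall>k. \<forall>y\<in>U. pd u k differentiable (at y)"
    and h: "h > 0"
    and inU: "\<And>s r. 0 \<le> s \<Longrightarrow> s \<le> h \<Longrightarrow> 0 \<le> r \<Longrightarrow> r \<le> h \<Longrightarrow> x + s *\<^sub>R axis i 1 + r *\<^sub>R axis j 1 \<in> U"
  shows "\<exists>\<xi> \<eta>. 0 < \<xi> \<and> \<xi> < h \<and> 0 < \<eta> \<and> \<eta> < h \<and>
     u (x + h *\<^sub>R axis i 1 + h *\<^sub>R axis j 1) - u (x + h *\<^sub>R axis i 1) - u (x + h *\<^sub>R axis j 1) + u x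
       = h * h * pd (pd u i) j (x + \<xi> *\<^sub>R axis i 1 + \<eta> *\<^sub>R axis j 1)"
proof -
  define a where "a = (axis i 1 :: real^'n)"
  define b where "b = (axis j 1 :: real^'n)"
  have inU': "x + s *\<^sub>R a + r *\<^sub>R b \<in> U" if "0 \<le> s" "s \<le> h" "0 \<le> r" "r \<le> h" for s r
    using inU that a_def b_def by auto
  define phi where "phi s = u ((x + h *\<^sub>R b) + s *\<^sub>R a) - u (x + s *\<^sub>R a)" for s
  define phi' where "phi' s = pd u i ((x + h *\<^sub>R b) + s *\<^sub>R a) - pd u i (x + s *\<^sub>R a)" for s
  have dphi: "DERIV phi s :> phi' s" if "0 \<le> s" "s \<le> h" for s
  proof -
    have p1: "(x + h *\<^sub>R b) + s *\<^sub>R a \<in> U" using inU'[of s h] that h by (simp add: algebra_simps)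
    have p2: "x + s *\<^sub>R a \<in> U" using inU'[of s 0] that h by simp
    have D1: "DERIV (\<lambda>s. u ((x + h *\<^sub>R b) + s *\<^sub>R a)) s :> pd u i ((x + h *\<^sub>R b) + s *\<^sub>R a)"
      using line_deriv[of u "x + h *\<^sub>R b" s a] p1 du unfolding a_def egrad_axis by blast
    have D2: "DERIV (\<lambda>s. u (x + s *\<^sub>R a)) s :> pd u i (x + s *\<^sub>R a)"
      using line_deriv[of u x s a] p2 du unfolding a_def egrad_axis by blast
    show ?thesis unfolding phi_def[abs_def] phi'_def using DERIV_diff[OF D1 D2] .
  qed
  obtain xi where xi: "0 < xi" "xi < h" "phi h - phi 0 = (h - 0) * phi' xi"
    using MVT2[OF h, of phi phi'] dphi by auto
  define chi where "chi r = pd u i ((x + xi *\<^sub>R a) + r *\<^sub>R b)" for r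
  have dchi: "DERIV chi r :> pd (pd u i) j ((x + xi *\<^sub>R a) + r *\<^sub>R b)" if "0 \<le> r" "r \<le> h" for r
  proof -
    have "(x + xi *\<^sub>R a) + r *\<^sub>R b \<in> U" using inU'[of xi r] that xi by simp
    then have "pd u i differentiable (at ((x + xi *\<^sub>R a) + r *\<^sub>R b))" using dpu by blast
    then show ?thesis unfolding chi_def[abs_def]
      using line_deriv[of "pd u i" "x + xi *\<^sub>R a" r b] unfolding b_def egrad_axis by blast
  qed
  obtain eta where eta: "0 < eta" "eta < h" "chi h - chi 0 = (h - 0) * pd (pd u i) j ((x + xi *\<^sub>R a) + eta *\<^sub>R b)"
    using MVT2[OF h, of chi "\<lambda>r. pd (pd u i) j ((x + xi *\<^sub>R a) + r *\<^sub>R b)"] dchi by auto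
  have "phi' xi = chi h - chi 0" unfolding phi'_def chi_def by (simp add: algebra_simps)
  then have "phi h - phi 0 = h * h * pd (pd u i) j (x + xi *\<^sub>R a + eta *\<^sub>R b)"
    using xi(3) eta(3) by simp
  moreover have "phi h - phi 0 = u (x + h *\<^sub>R a + h *\<^sub>R b) - u (x + h *\<^sub>R a) - u (x + h *\<^sub>R b) + u x"
  proof -
    have "u ((x + h *\<^sub>R b) + h *\<^sub>R a) = u (x + h *\<^sub>R a + h *\<^sub>R b)" by (simp add: ac_simps)
    then show ?thesis unfolding phi_def by simp
  qed
  ultimately have "u (x + h *\<^sub>R a + h *\<^sub>R b) - u (x + h *\<^sub>R a) - u (x + h *\<^sub>R b) + u x
       = h * h * pd (pd u i) j (x + xi *\<^sub>R a + eta *\<^sub>R b)" by simp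
  then show ?thesis using xi(1,2) eta(1,2) unfolding a_def b_def by blast
qed

lemma schwarz:
  fixes u :: "real^'n \<Rightarrow> real"
  assumes U: "open U" "x \<in> U"
    and du: "\<forall>y\<in>U. u differentiable (at y)"
    and dpu: "\<forall>k. \<forall>y\<in>U. pd u k differentiable (at y)"
    and cont: "\<forall>a b. continuous_on U (pd (pd u b) a)"
  shows "pd (pd u j) i x = pd (pd u i) j x"
proof (rule ccontr)
  assume ne: "pd (pd u j) i x \<noteq> pd (pd u i) j x"
  define F where "F = pd (pd u i) j"
  define G where "G = pd (pd u j) i"
  define e where "e = \<bar>F x - G x\<bar> / 2"
  have e: "e > 0" using ne unfolding e_def F_def G_def by simp
  have cF: "isCont F x" "isCont G x"
    using cont U unfolding F_def G_def by (auto simp: continuous_on_eq_continuous_at)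
  obtain d1 where d1: "d1 > 0" "\<And>y. dist y x < d1 \<Longrightarrow> dist (F y) (F x) < e"
    using cF(1) e unfolding continuous_at_eps_delta by blast
  obtain d2 where d2: "d2 > 0" "\<And>y. dist y x < d2 \<Longrightarrow> dist (G y) (G x) < e"
    using cF(2) e unfolding continuous_at_eps_delta by blast
  obtain d3 where d3: "d3 > 0" "ball x d3 \<subseteq> U" using U open_contains_ball by blast
  define h where "h = min d1 (min d2 d3) / 4"
  have h: "h > 0" "2 * h < d1" "2 * h < d2" "2 * h < d3" using d1 d2 d3 unfolding h_def by auto
  have small: "dist (x + s *\<^sub>R axis p 1 + r *\<^sub>R axis q 1) x \<le> 2 * h"
    if "0 \<le> s" "s \<le> h" "0 \<le> r" "r \<le> h" for s r and p q :: 'n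
  proof -
    have "dist (x + s *\<^sub>R axis p 1 + r *\<^sub>R axis q 1) x = norm (s *\<^sub>R axis p (1::real) + r *\<^sub>R axis q 1)"
      by (simp add: dist_norm)
    also have "\<dots> \<le> norm (s *\<^sub>R axis p (1::real)) + norm (r *\<^sub>R axis q (1::real))" by (rule norm_triangle_ineq)
    also have "\<dots> = s + r" using that by simp
    finally show ?thesis using that by simp
  qed
  have inU: "x + s *\<^sub>R axis p 1 + r *\<^sub>R axis q 1 \<in> U"
    if "0 \<le> s" "s \<le> h" "0 \<le> r" "r \<le> h" for s r and p q :: 'n
    using small[OF that, of p q] h d3 by (auto simp: dist_commute)
  obtain xi eta where A: "0 < xi" "xi < h" "0 < eta" "eta < h"
    "u (x + h *\<^sub>R axis i 1 + h *\<^sub>R axis j 1) - u (x + h *\<^sub>R axis i 1) - u (x + h *\<^sub>R axis j 1) + u x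
       = h * h * F (x + xi *\<^sub>R axis i 1 + eta *\<^sub>R axis j 1)"
    using delta_mvt[OF du dpu h(1), where x=x and i=i and j=j, OF inU] unfolding F_def by blast
  obtain xi' eta' where B: "0 < xi'" "xi' < h" "0 < eta'" "eta' < h"
    "u (x + h *\<^sub>R axis j 1 + h *\<^sub>R axis i 1) - u (x + h *\<^sub>R axis j 1) - u (x + h *\<^sub>R axis i 1) + u x
       = h * h * G (x + xi' *\<^sub>R axis j 1 + eta' *\<^sub>R axis i 1)"
    using delta_mvt[OF du dpu h(1), where x=x and i=j and j=i, OF inU] unfolding G_def by blast
  have "h * h * F (x + xi *\<^sub>R axis i 1 + eta *\<^sub>R axis j 1) = h * h * G (x + xi' *\<^sub>R axis j 1 + eta' *\<^sub>R axis i 1)"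
  proof -
    have "u (x + h *\<^sub>R axis j 1 + h *\<^sub>R axis i 1) = u (x + h *\<^sub>R axis i 1 + h *\<^sub>R axis j (1::real))"
      by (simp add: ac_simps)
    then show ?thesis using A(5) B(5) by linarith
  qed
  then have FG: "F (x + xi *\<^sub>R axis i 1 + eta *\<^sub>R axis j 1) = G (x + xi' *\<^sub>R axis j 1 + eta' *\<^sub>R axis i 1)"
    using h by simp
  have "dist (F (x + xi *\<^sub>R axis i 1 + eta *\<^sub>R axis j 1)) (F x) < e"
  proof -
    have "dist (x + xi *\<^sub>R axis i 1 + eta *\<^sub>R axis j 1) x < d1" using small[of xi eta i j] A h by linarith
    then show ?thesis using d1(2) by blast
  qed
  moreover have "dist (G (x + xi' *\<^sub>R axis j 1 + eta' *\<^sub>R axis i 1)) (G x) < e"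
  proof -
    have "dist (x + xi' *\<^sub>R axis j 1 + eta' *\<^sub>R axis i 1) x < d2" using small[of xi' eta' j i] B h by linarith
    then show ?thesis using d2(2) by blast
  qed
  ultimately have "\<bar>F x - G x\<bar> < 2 * e" using FG by (simp add: dist_real_def)
  then show False unfolding e_def by simp
qed

lemma grad_zero_min:
  fixes u :: "real^'n \<Rightarrow> real"
  assumes "open Om" "x0 \<in> Om" "\<forall>y\<in>Om. u x0 \<le> u y" "u differentiable (at x0)"
  shows "pd u m x0 = 0"
proof -
  have D: "DERIV (\<lambda>t. u (x0 + t *\<^sub>R axis m 1)) 0 :> pd u m x0"
    using line_deriv[of u x0 0 "axis m 1"] assms(4) unfolding egrad_axis by simp
  obtain d where d: "d > 0" "ball x0 d \<subseteq> Om" using assms(1,2) open_contains_ball by blast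
  have "\<forall>y. \<bar>0 - y\<bar> < d \<longrightarrow> u (x0 + 0 *\<^sub>R axis m 1) \<le> u (x0 + y *\<^sub>R axis m 1)"
  proof (intro allI impI)
    fix y :: real assume "\<bar>0 - y\<bar> < d"
    then have "x0 + y *\<^sub>R axis m 1 \<in> Om" using d by (auto simp: dist_norm)
    then show "u (x0 + 0 *\<^sub>R axis m 1) \<le> u (x0 + y *\<^sub>R axis m 1)" using assms(3) by simp
  qed
  then show ?thesis using DERIV_local_min[OF D d(1)] by blast
qed

lemma hess_psd:
  fixes u :: "real^'n \<Rightarrow> real"
  assumes Om: "open Om" "Om \<subseteq> U" "x0 \<in> Om" and mn: "\<forall>y\<in>Om. u x0 \<le> u y"
    and du: "\<forall>y\<in>U. u differentiable (at y)"
    and dpu: "\<forall>k. \<forall>y\<in>U. pd u k differentiable (at y)"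
  shows "0 \<le> (\<Sum>j\<in>UNIV. v$j * (\<Sum>i\<in>UNIV. v$i * pd (pd u j) i x0))"
proof (rule ccontr)
  define d where "d = (\<Sum>j\<in>UNIV. v$j * (\<Sum>i\<in>UNIV. v$i * pd (pd u j) i x0))"
  assume "\<not> 0 \<le> (\<Sum>j\<in>UNIV. v$j * (\<Sum>i\<in>UNIV. v$i * pd (pd u j) i x0))"
  then have dneg: "d < 0" unfolding d_def by simp
  define psi where "psi t = (\<Sum>j\<in>UNIV. v$j * pd u j (x0 + t *\<^sub>R v))" for t
  obtain r where r: "r > 0" "ball x0 r \<subseteq> Om" using Om open_contains_ball by blast
  have inO: "x0 + t *\<^sub>R v \<in> Om" if "\<bar>t\<bar> * (norm v + 1) < r" for t
  proof -
    have "norm (t *\<^sub>R v) \<le> \<bar>t\<bar> * (norm v + 1)" by (simp add: mult_left_mono)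
    then show ?thesis using that r by (auto simp: dist_norm)
  qed
  have dphi: "DERIV (\<lambda>t. u (x0 + t *\<^sub>R v)) t :> psi t" if "x0 + t *\<^sub>R v \<in> U" for t
  proof -
    have "egrad u (x0 + t *\<^sub>R v) \<bullet> v = psi t"
      unfolding psi_def egrad_def inner_vec_def by (simp add: mult.commute)
    then show ?thesis using line_deriv[of u x0 t v] du that by simp
  qed
  have dpsi: "DERIV psi 0 :> d"
  proof -
    have "DERIV (\<lambda>t. pd u j (x0 + t *\<^sub>R v)) 0 :> (\<Sum>i\<in>UNIV. v$i * pd (pd u j) i x0)" for j
    proof -
      have "egrad (pd u j) x0 \<bullet> v = (\<Sum>i\<in>UNIV. v$i * pd (pd u j) i x0)"
        unfolding egrad_def inner_vec_def by (simp add: mult.commute)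
      then show ?thesis using line_deriv[of "pd u j" x0 0 v] dpu Om by auto
    qed
    then have "DERIV (\<lambda>t. (\<Sum>j\<in>UNIV. v$j * pd u j (x0 + t *\<^sub>R v))) 0 :> d"
      unfolding d_def by (intro DERIV_sum DERIV_cmult) auto
    then show ?thesis unfolding psi_def[abs_def] .
  qed
  have psi0: "psi 0 = 0"
    unfolding psi_def using grad_zero_min[OF Om(1) Om(3) mn] du Om by auto
  obtain del where del: "del > 0" "\<And>h. h > 0 \<Longrightarrow> h < del \<Longrightarrow> psi 0 > psi (0 + h)"
    using DERIV_neg_dec_right[OF dpsi dneg] by blast
  define h where "h = min del (r / (norm v + 1)) / 2"
  have nv: "norm v + 1 > 0" by (simp add: add_nonneg_pos)
  define mm where "mm = min del (r / (norm v + 1))"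
  have mm: "mm > 0" "mm \<le> del" "mm \<le> r / (norm v + 1)" unfolding mm_def using del r nv by auto
  have "mm * (norm v + 1) \<le> r" using mm(3) nv by (simp add: field_simps)
  then have h: "h > 0" "h < del" "h * (norm v + 1) < r"
    using mm r nv unfolding h_def mm_def[symmetric] by (auto simp: field_simps)
  have inO': "x0 + t *\<^sub>R v \<in> Om" if "0 \<le> t" "t \<le> h" for t
  proof (rule inO)
    have "\<bar>t\<bar> * (norm v + 1) \<le> h * (norm v + 1)" using that nv by (simp add: mult_right_mono)
    then show "\<bar>t\<bar> * (norm v + 1) < r" using h by linarith
  qed
  obtain z where z: "0 < z" "z < h" "u (x0 + h *\<^sub>R v) - u (x0 + 0 *\<^sub>R v) = (h - 0) * psi z"
    using MVT2[OF h(1), of "\<lambda>t. u (x0 + t *\<^sub>R v)" psi] dphi inO' Om(2) by blast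
  have "psi z < 0" using del(2)[of z] z h psi0 by simp
  then have "h * psi z < 0" using h(1) by (simp add: mult_pos_neg)
  then have "u (x0 + h *\<^sub>R v) < u x0" using z by simp
  moreover have "u x0 \<le> u (x0 + h *\<^sub>R v)" using mn inO'[of h] h by simp
  ultimately show False by simp
qed

definition om :: "real \<Rightarrow> real^'n \<Rightarrow> real" where
  "om K x = 4 / (1 + K * (x \<bullet> x))^2"

lemma gK_om: "gK K x = om K x *\<^sub>R mat 1"
  unfolding gK_def om_def by (simp add: power2_norm_eq_inner)

lemma gK_entry: "gK K x $ a $ b = (if a = b then om K x else 0)"
  unfolding gK_om by (simp add: mat_def)

lemma ms_pos: "x \<in> model_space K \<Longrightarrow> 1 + K * (x \<bullet> x) > 0"
proof -
  assume "x \<in> model_space K"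
  then have "\<bar>K\<bar> * (x \<bullet> x) < 1" unfolding model_space_def by (simp add: power2_norm_eq_inner)
  moreover have "(- \<bar>K\<bar>) * (x \<bullet> x) \<le> K * (x \<bullet> x)"
    by (rule mult_right_mono) auto
  ultimately show ?thesis by linarith
qed

lemma om_pos: "x \<in> model_space K \<Longrightarrow> om K x > 0"
  unfolding om_def using ms_pos[of x K] by simp

lemma d_quot: "z \<noteq> 0 \<Longrightarrow> DERIV (\<lambda>z::real. 4 / z^2) z :> - 8 / z^3"
  apply (rule derivative_eq_intros refl | simp)+
  apply (simp add: field_simps power2_eq_square power3_eq_cube eval_nat_numeral)
  done

lemma d_inner: "DERIV (\<lambda>t::real. c + K * (2 * t * a + t^2)) 0 :> K * 2 * a"
  by (rule derivative_eq_intros refl | simp)+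

lemma pd_om:
  fixes x :: "real^'n"
  assumes "1 + K * (x \<bullet> x) \<noteq> 0"
  shows "pd (om K) i x = - 16 * K * (x $ i) / (1 + K * (x \<bullet> x))^3"
proof -
  define c where "c = 1 + K * (x \<bullet> x)"
  have e: "om K (x + t *\<^sub>R axis i 1) = 4 / (c + K * (2 * t * (x$i) + t^2))^2" for t
  proof -
    have "(x + t *\<^sub>R axis i 1) \<bullet> (x + t *\<^sub>R axis i 1) = x \<bullet> x + 2 * t * (x$i) + t^2"
      by (simp add: inner_add_left inner_add_right inner_axis inner_axis' power2_eq_square algebra_simps)
    then show ?thesis unfolding om_def c_def by (simp add: algebra_simps)
  qed
  have "DERIV (\<lambda>t. 4 / (c + K * (2 * t * (x$i) + t^2))^2) 0 :> (- 8 / c^3) * (K * 2 * (x$i))"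
    using DERIV_chain'[OF d_inner[of c K "x$i"] d_quot] assms c_def by simp
  then have "DERIV (\<lambda>t. om K (x + t *\<^sub>R axis i 1)) 0 :> (- 8 / c^3) * (K * 2 * (x$i))"
    unfolding e .
  then have "pd (om K) i x = (- 8 / c^3) * (K * 2 * (x$i))" unfolding pd_def by (rule DERIV_imp_deriv)
  then show ?thesis unfolding c_def by simp
qed

lemma pd_gK:
  assumes "x \<in> model_space K"
  shows "pd (\<lambda>y. gK K y $ a $ b) i x = (if a = b then - 16 * K * (x $ i) / (1 + K * (x \<bullet> x))^3 else 0)"
proof (cases "a = b")
  case True
  have "(\<lambda>y. gK K y $ a $ b) = om K" using True by (simp add: gK_entry[abs_def])
  moreover have "pd (om K) i x = - 16 * K * (x $ i) / (1 + K * (x \<bullet> x))^3"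
    using pd_om[of K x i] ms_pos[OF assms] by simp
  ultimately show ?thesis using True by simp
next
  case False
  then have "(\<lambda>y. gK K y $ a $ b) = (\<lambda>y. 0)" by (simp add: gK_entry[abs_def])
  then show ?thesis using False by (simp add: pd_def)
qed

lemma matrix_inv_scaled:
  assumes "c \<noteq> 0"
  shows "matrix_inv (c *\<^sub>R mat 1 :: real^'n^'n) = (1/c) *\<^sub>R mat 1"
proof -
  have ex: "\<exists>B::real^'n^'n. (c *\<^sub>R mat 1) ** B = mat 1 \<and> B ** (c *\<^sub>R mat 1) = mat 1"
  proof (intro exI[of _ "(1/c) *\<^sub>R mat 1"] conjI)
    have r: "(X::real^'n^'n) ** (a *\<^sub>R Y) = a *\<^sub>R (X ** Y)" for a X Y
      by (simp add: matrix_matrix_mult_def vec_eq_iff sum_distrib_left algebra_simps scaleR_sum_right)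
    show "(c *\<^sub>R mat 1) ** ((1/c) *\<^sub>R mat 1) = (mat 1::real^'n^'n)"
      using assms by (simp add: r scalar_matrix_assoc[symmetric])
    show "((1/c) *\<^sub>R mat 1) ** (c *\<^sub>R mat 1) = (mat 1::real^'n^'n)"
      using assms by (simp add: r scalar_matrix_assoc[symmetric])
  qed
  then have "(c *\<^sub>R mat 1) ** matrix_inv (c *\<^sub>R mat 1 :: real^'n^'n) = mat 1"
    unfolding matrix_inv_def by (rule someI_ex[THEN conjunct1])
  then have "c *\<^sub>R matrix_inv (c *\<^sub>R mat 1 :: real^'n^'n) = mat 1"
    by (simp add: scalar_matrix_assoc[symmetric])
  then have "(1/c) *\<^sub>R (c *\<^sub>R matrix_inv (c *\<^sub>R mat 1 :: real^'n^'n)) = (1/c) *\<^sub>R mat 1" by simp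
  then show ?thesis using assms by simp
qed

lemma minv_gK_entry:
  assumes "x \<in> model_space K"
  shows "matrix_inv (gK K x) $ a $ b = (if a = b then 1 / om K x else 0)"
proof -
  have "matrix_inv (gK K x) = (1 / om K x) *\<^sub>R mat 1"
    using matrix_inv_scaled[of "om K x"] om_pos[OF assms] unfolding gK_om by simp
  then show ?thesis by (simp add: mat_def)
qed

lemma christoffel_sym: "christoffel (gK K) m i j x = christoffel (gK K) m j i x"
proof -
  have "(\<lambda>y. gK K y $ i $ j) = (\<lambda>y. gK K y $ j $ i)" by (auto simp: gK_entry)
  then show ?thesis unfolding christoffel_def by (simp add: algebra_simps)
qed

lemma christoffel_cont:
  fixes S :: "(real^'n) set"
  assumes "S \<subseteq> model_space K"
  shows "continuous_on S (christoffel (gK K) m i j)"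
proof -
  define P where "P a b c x = (if a = b then - 16 * K * (x $ c) / (1 + K * (x \<bullet> x))^3 else 0)" for a b c :: 'n and x :: "real^'n"
  define Q where "Q a b x = (if a = b then 1 / om K x else 0)" for a b :: 'n and x :: "real^'n"
  have e: "christoffel (gK K) m i j x = (1/2) * (\<Sum>l\<in>UNIV. Q m l x * (P j l i x + P i l j x - P i j l x))"
    if "x \<in> S" for x
  proof -
    have xm: "x \<in> model_space K" using that assms by auto
    show ?thesis unfolding christoffel_def P_def Q_def by (simp add: minv_gK_entry[OF xm] pd_gK[OF xm])
  qed
  have pos: "x \<in> S \<Longrightarrow> 1 + K * (x \<bullet> x) \<noteq> 0" for x using assms ms_pos by fastforce
  have cP: "continuous_on S (P a b c)" for a b c
  proof (cases "a = b")
    case True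
    then have "P a b c = (\<lambda>x. - 16 * K * (x $ c) / (1 + K * (x \<bullet> x))^3)" by (simp add: P_def fun_eq_iff)
    moreover have "continuous_on S (\<lambda>x::real^'n. - 16 * K * (x $ c) / (1 + K * (x \<bullet> x))^3)"
      by (intro continuous_intros) (use pos in auto)
    ultimately show ?thesis by simp
  next
    case False
    then have "P a b c = (\<lambda>x. 0)" by (simp add: P_def fun_eq_iff)
    then show ?thesis by (simp add: continuous_on_const)
  qed
  have cQ: "continuous_on S (Q a b)" for a b
  proof (cases "a = b")
    case True
    then have "Q a b = (\<lambda>x. (1 + K * (x \<bullet> x))^2 / 4)" by (simp add: Q_def om_def fun_eq_iff)
    moreover have "continuous_on S (\<lambda>x::real^'n. (1 + K * (x \<bullet> x))^2 / 4)"
      by (intro continuous_intros) auto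
    ultimately show ?thesis by simp
  next
    case False
    then have "Q a b = (\<lambda>x. 0)" by (simp add: Q_def fun_eq_iff)
    then show ?thesis by (simp add: continuous_on_const)
  qed
  have "continuous_on S (\<lambda>x. (1/2) * (\<Sum>l\<in>UNIV. Q m l x * (P j l i x + P i l j x - P i j l x)))"
    by (rule continuous_on_mult[OF continuous_on_const], rule continuous_on_sum,
        rule continuous_on_mult[OF cQ], intro continuous_on_add continuous_on_diff cP)
  then show ?thesis by (rule continuous_on_eq) (simp add: e)
qed

lemma scaled_id_mult: "(c *\<^sub>R mat 1 :: real^'n^'n) *v v = c *\<^sub>R v"
  by (simp add: scaleR_matrix_vector_assoc[symmetric])

lemma boundary_lower:
  fixes u :: "real^'n \<Rightarrow> real" and \<Omega> :: "(real^'n) set"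
  assumes dom: "open \<Omega>" "\<Omega> \<noteq> {}" and cpt: "compact (closure \<Omega>)"
    and ms: "closure \<Omega> \<subseteq> model_space K"
    and bdry: "C2_boundary \<Omega>"
    and du: "\<forall>x\<in>closure \<Omega>. u differentiable (at x)"
    and c2: "c2 > 0"
    and dir: "\<forall>p\<in>frontier \<Omega>. u p = K * c1"
    and neu: "\<forall>p\<in>frontier \<Omega>. \<forall>\<nu>. outward_unit_normal (gK K p) \<Omega> p \<nu> \<longrightarrow> egrad u p \<bullet> \<nu> = c2"
  shows "\<exists>q\<in>\<Omega>. u q < K * c1"
proof -
  have "bounded \<Omega>" using compact_imp_bounded[OF cpt] bounded_subset closure_subset by blast
  then have "\<Omega> \<noteq> UNIV" using not_bounded_UNIV by auto
  then obtain p where p: "p \<in> frontier \<Omega>" using frontier_not_empty[OF dom(2)] by blast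
  have pcl: "p \<in> closure \<Omega>" using p frontier_def by auto
  obtain V psi where lf: "local_defining_fn \<Omega> p V psi" using bdry p C2_boundary_def by blast
  have V: "open V" "p \<in> V" "\<forall>x\<in>V. psi differentiable (at x)" "\<forall>x\<in>V. egrad psi x \<noteq> 0"
     "\<Omega> \<inter> V = {x\<in>V. psi x < 0}"
    using lf unfolding local_defining_fn_def C2_on_def by auto
  define om0 where "om0 = om K p"
  have om0: "om0 > 0" using om_pos ms pcl om0_def by blast
  define gr where "gr = egrad psi p"
  have gr0: "gr \<noteq> 0" using V gr_def by auto
  define v where "v = matrix_inv (gK K p) *v egrad psi p"
  have v: "v = (1/om0) *\<^sub>R gr"
    unfolding v_def gr_def gK_om om0_def using om0 om0_def
    by (subst matrix_inv_scaled) (auto simp: scaled_id_mult)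
  define beta where "beta = 1 / sqrt (v \<bullet> (gK K p *v v))"
  have "v \<bullet> (gK K p *v v) = om0 * (v \<bullet> v)" unfolding gK_om om0_def[symmetric] by (simp add: scaled_id_mult)
  moreover have "v \<bullet> v > 0" using v gr0 om0 by simp
  ultimately have beta: "beta > 0" unfolding beta_def using om0 by simp
  have "outward_unit_normal (gK K p) \<Omega> p (beta *\<^sub>R v)"
    unfolding outward_unit_normal_def using lf unfolding beta_def v_def Let_def by blast
  then have "egrad u p \<bullet> (beta *\<^sub>R v) = c2" using neu p by blast
  then have "(beta / om0) * (egrad u p \<bullet> gr) = c2" unfolding v by (simp add: inner_scaleR_right)
  then have "0 < (beta / om0) * (egrad u p \<bullet> gr)" using c2 by simp
  moreover have "beta / om0 > 0" using beta om0 by simp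
  ultimately have ug: "egrad u p \<bullet> gr > 0" using zero_less_mult_pos by blast
  define w where "w = - gr"
  have dpsi: "DERIV (\<lambda>t. psi (p + t *\<^sub>R w)) 0 :> egrad psi p \<bullet> w"
    using line_deriv[of psi p 0 w] V by simp
  have "egrad psi p \<bullet> w < 0" unfolding w_def gr_def using gr0 gr_def by simp
  then obtain d1 where d1: "d1 > 0" "\<And>h. h > 0 \<Longrightarrow> h < d1 \<Longrightarrow> psi (p + 0 *\<^sub>R w) > psi (p + (0 + h) *\<^sub>R w)"
    using DERIV_neg_dec_right[OF dpsi] by blast
  have dU: "DERIV (\<lambda>t. u (p + t *\<^sub>R w)) 0 :> egrad u p \<bullet> w"
    using line_deriv[of u p 0 w] du pcl by simp
  have "egrad u p \<bullet> w < 0" unfolding w_def using ug by simp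
  then obtain d2 where d2: "d2 > 0" "\<And>h. h > 0 \<Longrightarrow> h < d2 \<Longrightarrow> u (p + 0 *\<^sub>R w) > u (p + (0 + h) *\<^sub>R w)"
    using DERIV_neg_dec_right[OF dU] by blast
  obtain d3 where d3: "d3 > 0" "ball p d3 \<subseteq> V" using V open_contains_ball by blast
  have psip: "psi p \<le> 0"
  proof (rule ccontr)
    assume "\<not> psi p \<le> 0"
    then have pp: "psi p > 0" by simp
    have "isCont psi p" using V differentiable_imp_continuous_within by blast
    then obtain e where e: "e > 0" "\<And>y. dist y p < e \<Longrightarrow> dist (psi y) (psi p) < psi p"
      using pp unfolding continuous_at_eps_delta by blast
    obtain y where y: "y \<in> \<Omega>" "dist y p < min e d3" using pcl closure_approachable d3 e
      by (metis min_less_iff_conj)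
    then have "y \<in> V" using d3 by (auto simp: dist_commute)
    then have "psi y < 0" using y V(5) by auto
    moreover have "dist (psi y) (psi p) < psi p" using e y by auto
    ultimately show False using pp by (simp add: dist_real_def)
  qed
  define nw where "nw = norm w + 1"
  have nw: "nw > 0" unfolding nw_def by (simp add: add_nonneg_pos)
  define h where "h = min d1 (min d2 (d3 / nw)) / 2"
  have h: "h > 0" "h < d1" "h < d2" "h * nw < d3"
  proof -
    define mm where "mm = min d1 (min d2 (d3 / nw))"
    have mm: "mm > 0" "mm \<le> d1" "mm \<le> d2" "mm \<le> d3 / nw" unfolding mm_def using d1 d2 d3 nw by auto
    have "mm * nw \<le> d3" using mm(4) nw by (simp add: field_simps)
    then show "h > 0" "h < d1" "h < d2" "h * nw < d3" using mm nw d3 unfolding h_def mm_def[symmetric]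
      by (auto simp: field_simps)
  qed
  define q where "q = p + h *\<^sub>R w"
  have "norm (h *\<^sub>R w) \<le> h * nw" using h(1) unfolding nw_def by (simp add: mult_left_mono)
  have hn: "h * norm w \<le> h * nw" using h(1) unfolding nw_def by (intro mult_left_mono) auto
  have "dist p q = h * norm w" unfolding q_def using h(1) by (simp add: dist_norm)
  then have "dist p q < d3" using hn h(4) by linarith
  then have "q \<in> V" using d3 by auto
  moreover have "psi q < 0" using d1(2)[OF h(1) h(2)] psip unfolding q_def by simp
  ultimately have "q \<in> \<Omega>" using V(5) by blast
  moreover have "u q < K * c1" using d2(2)[OF h(1) h(3)] dir p unfolding q_def by simp
  ultimately show ?thesis by blast
qed

lemma diag_entry_quad:
  fixes P A :: "real^'n^'n"
  shows "(transpose P ** A ** P) $ i $ i = (\<chi> r. P $ r $ i) \<bullet> (A *v (\<chi> r. P $ r $ i))"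
proof -
  have "(transpose P ** A ** P) $ i $ i = (\<Sum>k\<in>UNIV. (\<Sum>l\<in>UNIV. P$l$i * A$l$k) * P$k$i)"
    unfolding matrix_matrix_mult_def transpose_def by simp
  also have "\<dots> = (\<Sum>k\<in>UNIV. \<Sum>l\<in>UNIV. P$l$i * (A$l$k * P$k$i))"
    by (simp add: sum_distrib_right mult.assoc)
  also have "\<dots> = (\<Sum>l\<in>UNIV. \<Sum>k\<in>UNIV. P$l$i * (A$l$k * P$k$i))"
    by (rule sum.swap)
  also have "\<dots> = (\<Sum>l\<in>UNIV. P$l$i * (\<Sum>k\<in>UNIV. A$l$k * P$k$i))"
    by (simp add: sum_distrib_left)
  also have "\<dots> = (\<chi> r. P $ r $ i) \<bullet> (A *v (\<chi> r. P $ r $ i))"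
    unfolding matrix_vector_mult_def inner_vec_def by simp
  finally show ?thesis .
qed

lemma esym_nonneg: "(\<forall>i. lam $ i \<ge> 0) \<Longrightarrow> esym j (lam::real^'n) \<ge> 0"
  unfolding esym_def by (intro sum_nonneg prod_nonneg) auto

theorem lemma3p1:
  fixes \<Omega> :: "(real^'n) set" and u :: "real^'n \<Rightarrow> real"
    and K c1 c2 :: real and k l :: nat
  assumes n2: "CARD('n) \<ge> 2"
    and k: "2 \<le> k" "k \<le> CARD('n)" and l: "l < k"
    and dom: "open \<Omega>" "connected \<Omega>" "\<Omega> \<noteq> {}"
    and bdd: "compact (closure \<Omega>)" "closure \<Omega> \<subseteq> model_space K"
    and bdry: "C2_boundary \<Omega>"
    and c: "c1 > 0" "c2 > 0"
    and reg: "\<exists>U. open U \<and> closure \<Omega> \<subseteq> U \<and> U \<subseteq> model_space K \<and> C2_on U u"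
    and eq: "\<forall>x\<in>closure \<Omega>.
       sigma_t k (gK K x) (rhess (gK K) u x + (K * u x) *\<^sub>R gK K x) /
       sigma_t l (gK K x) (rhess (gK K) u x + (K * u x) *\<^sub>R gK K x)
       = real (CARD('n) choose k) / real (CARD('n) choose l)"
    and dir: "\<forall>p\<in>frontier \<Omega>. u p = K * c1"
    and neu: "\<forall>p\<in>frontier \<Omega>. \<forall>\<nu>. outward_unit_normal (gK K p) \<Omega> p \<nu> \<longrightarrow> egrad u p \<bullet> \<nu> = c2"
    and pos: "\<forall>x\<in>\<Omega>. K * u x \<ge> 0"
  shows "\<forall>x\<in>closure \<Omega>.
     tensor_eigvals (gK K x) (rhess (gK K) u x + (K * u x) *\<^sub>R gK K x) \<in> gamma_cone k"

proof -
  obtain U where U: "open U" "closure \<Omega> \<subseteq> U" "U \<subseteq> model_space K" "C2_on U u" using reg by blast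
  have du: "\<forall>x\<in>U. u differentiable (at x)" and dpu: "\<forall>i. \<forall>x\<in>U. pd u i differentiable (at x)"
    and cpp: "\<forall>i j. continuous_on U (pd (pd u j) i)" using U(4) unfolding C2_on_def by auto
  define S where "S = closure \<Omega>"
  define G :: "real^'n \<Rightarrow> real^'n^'n" where "G x = gK K x" for x
  define A :: "real^'n \<Rightarrow> real^'n^'n" where "A x = rhess (gK K) u x + (K * u x) *\<^sub>R gK K x" for x
  define n where "n = CARD('n)"
  have SU: "S \<subseteq> U" using U S_def by simp
  have Sms: "S \<subseteq> model_space K" using U S_def by simp
  have symA: "transpose (A x) = A x" if "x \<in> U" for x
  proof -
    have "A x $ j $ i = A x $ i $ j" for i j
    proof -
      have s1: "pd (pd u i) j x = pd (pd u j) i x" using schwarz[OF U(1) that du dpu cpp, of i j] by simp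
      have s2: "\<And>m. christoffel (gK K) m j i x = christoffel (gK K) m i j x" using christoffel_sym by blast
      have s3: "gK K x $ j $ i = gK K x $ i $ j" by (simp add: gK_entry)
      show ?thesis unfolding A_def rhess_def by (simp only: vector_add_component vector_scaleR_component vec_lambda_beta s1 s2 s3)
    qed
    then show ?thesis by (simp add: transpose_def vec_eq_iff)
  qed
  have eig: "\<exists>lam. g_eigvals (G x) (A x) lam" if "x \<in> U" for x
    unfolding G_def gK_om using g_eig_exists[OF om_pos symA[OF that]] that U(3) by blast
  have sigF: "sigma_t j (G x) (A x) = coeff (Fpoly (G x) (A x)) (n - j)" if "x \<in> U" "j \<le> n" for x j
    using sigma_t_Fpoly[OF eig[OF that(1)]] that(2) n_def by simp
  have cu: "continuous_on U u" using du
    by (meson continuous_at_imp_continuous_on differentiable_imp_continuous_within)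
  have cpu: "continuous_on U (pd u m)" for m using dpu
    by (meson continuous_at_imp_continuous_on differentiable_imp_continuous_within)
  have cGU: "continuous_on U (\<lambda>x. gK K x $ i $ j)" for i j
  proof -
    have pos: "x \<in> U \<Longrightarrow> 1 + K * (x \<bullet> x) \<noteq> 0" for x using U(3) ms_pos by fastforce
    show ?thesis
    proof (cases "i = j")
      case True
      have "continuous_on U (\<lambda>x::real^'n. 4 / (1 + K * (x \<bullet> x))^2)"
        by (intro continuous_intros) (use pos in auto)
      then show ?thesis using True unfolding gK_entry om_def by simp
    next
      case False
      then show ?thesis unfolding gK_entry by (simp add: continuous_on_const)
    qed
  qed
  have cG: "continuous_on S (\<lambda>x. G x $ i $ j)" for i j
    unfolding G_def using continuous_on_subset[OF cGU SU] .
  have cA: "continuous_on S (\<lambda>x. A x $ i $ j)" for i j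
  proof -
    have c1: "continuous_on U (pd (pd u j) i)" using cpp by blast
    have c2: "continuous_on U (\<lambda>x. \<Sum>m\<in>UNIV. christoffel (gK K) m i j x * pd u m x)"
      by (intro continuous_on_sum continuous_on_mult christoffel_cont[OF U(3)] cpu)
    have c3: "continuous_on U (\<lambda>x. K * u x * gK K x $ i $ j)"
      by (intro continuous_on_mult continuous_on_const cu cGU)
    have "continuous_on U (\<lambda>x. pd (pd u j) i x - (\<Sum>m\<in>UNIV. christoffel (gK K) m i j x * pd u m x)
            + K * u x * gK K x $ i $ j)"
      by (rule continuous_on_add[OF continuous_on_diff[OF c1 c2] c3])
    then have "continuous_on S (\<lambda>x. pd (pd u j) i x - (\<Sum>m\<in>UNIV. christoffel (gK K) m i j x * pd u m x)
            + K * u x * gK K x $ i $ j)"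
      using continuous_on_subset SU by blast
    then show ?thesis by (rule continuous_on_eq) (simp add: A_def rhess_def)
  qed
  have dG: "det (G x) \<noteq> 0" if "x \<in> U" for x
    using g_eig_charpoly(1) eig[OF that] by blast
  have csig: "continuous_on S (\<lambda>x. sigma_t j (G x) (A x))" if "j \<le> n" for j
  proof -
    have "continuous_on S (\<lambda>x. coeff (Fpoly (G x) (A x)) (n - j))"
      by (rule cont_Fpoly[OF cG cA]) (use dG SU in auto)
    then show ?thesis by (rule continuous_on_eq) (use sigF SU that in auto)
  qed
  have kn: "k \<le> n" "l \<le> n" using k l n_def by auto
  have ratio: "real (n choose k) / real (n choose l) > 0" using kn by (simp add: zero_less_binomial)
  have sk_nz: "sigma_t k (G x) (A x) \<noteq> 0" if "x \<in> S" for x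
  proof
    assume "sigma_t k (G x) (A x) = 0"
    then have "real (n choose k) / real (n choose l) = 0"
      using eq that unfolding S_def G_def A_def n_def by force
    then show False using ratio by linarith
  qed
  have duS: "\<forall>x\<in>closure \<Omega>. u differentiable (at x)" using du SU S_def by blast
  obtain q where q: "q \<in> \<Omega>" "u q < K * c1"
    using boundary_lower[OF dom(1,3) bdd(1) bdd(2) bdry duS c(2) dir neu] by blast
  have cS: "compact S" "S \<noteq> {}" using bdd dom S_def by auto
  have cuS: "continuous_on S u" using continuous_on_subset[OF cu SU] .
  obtain x0 where x0S: "x0 \<in> S" and x0min: "\<And>y. y \<in> S \<Longrightarrow> u x0 \<le> u y"
    using continuous_attains_inf[OF cS cuS] by blast
  have "u x0 < K * c1" using x0min[of q] q closure_subset S_def by fastforce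
  then have "x0 \<notin> frontier \<Omega>" using dir by auto
  then have x0O: "x0 \<in> \<Omega>" using x0S unfolding S_def frontier_def interior_open[OF dom(1)] by blast
  have mn: "\<forall>y\<in>\<Omega>. u x0 \<le> u y" using x0min closure_subset S_def by blast
  have OU: "\<Omega> \<subseteq> U" using SU closure_subset S_def by blast
  have x0U: "x0 \<in> U" using OU x0O by blast
  have grad0: "pd u m x0 = 0" for m using grad_zero_min[OF dom(1) x0O mn] du x0U by blast
  have psd: "0 \<le> (\<Sum>j\<in>UNIV. v$j * (\<Sum>i\<in>UNIV. v$i * pd (pd u j) i x0))" for v :: "real^'n"
    using hess_psd[OF dom(1) OU x0O mn du dpu] .
  define c0 where "c0 = K * u x0 * om K x0"
  have c0: "c0 \<ge> 0" unfolding c0_def using pos x0O om_pos[of x0 K] x0U U(3)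
    by (metis less_eq_real_def mult_nonneg_nonneg subset_iff)
  have Ax0: "A x0 $ i $ j = pd (pd u j) i x0 + (if i = j then c0 else 0)" for i j
    unfolding A_def rhess_def c0_def by (simp add: grad0 gK_entry)
  have quad: "v \<bullet> (A x0 *v v) \<ge> 0" for v
  proof -
    have "v \<bullet> (A x0 *v v) = (\<Sum>i\<in>UNIV. v$i * (\<Sum>j\<in>UNIV. (pd (pd u j) i x0 + (if i = j then c0 else 0)) * v$j))"
      unfolding inner_vec_def matrix_vector_mult_def Ax0 by simp
    also have "\<dots> = (\<Sum>i\<in>UNIV. \<Sum>j\<in>UNIV. v$i * (pd (pd u j) i x0 * v$j)) + (\<Sum>i\<in>UNIV. v$i * (c0 * v$i))"
    proof -
      have r: "v$i * (\<Sum>j\<in>UNIV. (pd (pd u j) i x0 + (if i = j then c0 else 0)) * v$j)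
          = (\<Sum>j\<in>UNIV. v$i * (pd (pd u j) i x0 * v$j)) + v$i * (c0 * v$i)" for i
      proof -
        have "v$i * (\<Sum>j\<in>UNIV. (pd (pd u j) i x0 + (if i = j then c0 else 0)) * v$j)
            = (\<Sum>j\<in>UNIV. v$i * ((pd (pd u j) i x0 + (if i = j then c0 else 0)) * v$j))"
          by (simp add: sum_distrib_left)
        also have "\<dots>
            = (\<Sum>j\<in>UNIV. v$i * (pd (pd u j) i x0 * v$j) + (if i = j then v$i * (c0 * v$i) else 0))"
          by (rule sum.cong) (auto simp: algebra_simps)
        also have "\<dots> = (\<Sum>j\<in>UNIV. v$i * (pd (pd u j) i x0 * v$j)) + v$i * (c0 * v$i)"
          by (simp add: sum.distrib)
        finally show ?thesis .
      qed
      show ?thesis unfolding r by (simp add: sum.distrib)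
    qed
    also have "(\<Sum>i\<in>UNIV. \<Sum>j\<in>UNIV. v$i * (pd (pd u j) i x0 * v$j)) = (\<Sum>j\<in>UNIV. \<Sum>i\<in>UNIV. v$i * (pd (pd u j) i x0 * v$j))"
      by (rule sum.swap)
    also have "\<dots> = (\<Sum>j\<in>UNIV. v$j * (\<Sum>i\<in>UNIV. v$i * pd (pd u j) i x0))"
      by (simp add: sum_distrib_left algebra_simps)
    finally have e: "v \<bullet> (A x0 *v v) = (\<Sum>j\<in>UNIV. v$j * (\<Sum>i\<in>UNIV. v$i * pd (pd u j) i x0)) + c0 * (\<Sum>i\<in>UNIV. v$i * v$i)"
      by (simp add: sum_distrib_left algebra_simps)
    have "0 \<le> (\<Sum>i\<in>UNIV. v$i * v$i)" by (intro sum_nonneg) simp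
    then have "0 \<le> c0 * (\<Sum>i\<in>UNIV. v$i * v$i)" using c0 by (rule mult_nonneg_nonneg[rotated])
    then show ?thesis using e psd[of v] by linarith
  qed
  define lam0 where "lam0 = tensor_eigvals (G x0) (A x0)"
  have ge0: "g_eigvals (G x0) (A x0) lam0" unfolding lam0_def tensor_eigvals_def
    by (rule someI_ex[OF eig[OF x0U]])
  then obtain P where P: "transpose P ** A x0 ** P = diagm lam0" unfolding g_eigvals_def by blast
  have lam_nn: "lam0 $ i \<ge> 0" for i
  proof -
    have "lam0 $ i = (transpose P ** A x0 ** P) $ i $ i" unfolding P by (simp add: diagm_def)
    then show ?thesis using diag_entry_quad[of P "A x0" i] quad by simp
  qed
  have sig_lam: "sigma_t j (G x0) (A x0) = esym j lam0" for j unfolding sigma_t_def lam0_def ..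
  have "esym k lam0 > 0" using esym_nonneg[of lam0 k] lam_nn sk_nz[OF x0S] sig_lam by force
  then have x0pos: "\<forall>i\<in>{1..k}. sigma_t i (G x0) (A x0) > 0"
    using gamma_closed[of k lam0] kn esym_nonneg[of lam0] lam_nn unfolding sig_lam n_def by blast
  define sg where "sg i x = sigma_t i (G x) (A x)" for i x
  define T where "T = {x\<in>S. \<forall>i\<in>{1..k}. sg i x > 0}"
  have csg: "continuous_on S (sg i)" if "i \<in> {1..k}" for i
    unfolding sg_def[abs_def] using csig[of i] that kn by simp
  have ne: "{1..k} \<noteq> {}" using k by simp
  have T1: "T = (\<Inter>i\<in>{1..k}. S \<inter> sg i -` {0<..})" unfolding T_def using ne by auto
  have T2: "T = (\<Inter>i\<in>{1..k}. S \<inter> sg i -` {0..})"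
  proof -
    have "(\<forall>i\<in>{1..k}. sg i x > 0) \<longleftrightarrow> (\<forall>i\<in>{1..k}. sg i x \<ge> 0)" if "x \<in> S" for x
    proof
      assume "\<forall>i\<in>{1..k}. sg i x \<ge> 0"
      moreover have "sg k x \<noteq> 0" using sk_nz[OF that] sg_def by simp
      moreover have "k \<in> {1..k}" using k by simp
      ultimately have "sg k x > 0" by force
      then have "esym k (tensor_eigvals (G x) (A x)) > 0"
        unfolding sg_def sigma_t_def by simp
      then show "\<forall>i\<in>{1..k}. sg i x > 0"
        using gamma_closed[of k "tensor_eigvals (G x) (A x)"] kn \<open>\<forall>i\<in>{1..k}. sg i x \<ge> 0\<close>
        unfolding sg_def sigma_t_def n_def by blast
    qed auto
    then show ?thesis unfolding T_def using ne by auto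
  qed
  have "openin (top_of_set S) T" unfolding T1
    by (rule openin_INT2[OF _ ne]) (auto intro: continuous_openin_preimage_gen[OF csg open_greaterThan])
  moreover have "closedin (top_of_set S) T" unfolding T2
    by (rule closedin_INT[OF ne]) (auto intro: continuous_closedin_preimage[OF csg closed_atLeast])
  moreover have "connected S" unfolding S_def by (rule connected_imp_connected_closure[OF dom(2)])
  ultimately have "T = {} \<or> T = S" unfolding connected_clopen by blast
  moreover have "x0 \<in> T" unfolding T_def sg_def using x0S x0pos by blast
  ultimately have TS: "T = S" by blast
  show ?thesis
  proof
    fix x assume "x \<in> closure \<Omega>"
    then have "x \<in> T" using TS S_def by simp
    then show "tensor_eigvals (gK K x) (rhess (gK K) u x + (K * u x) *\<^sub>R gK K x) \<in> gamma_cone k"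
      unfolding T_def sg_def sigma_t_def gamma_cone_def G_def A_def by simp
  qed
qed

end
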